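(* In the $\beta$-model with true parameter satisfying $\beta_1=\cdots=\beta_r$, let $r$ be a fixed positive integer. (a) If $b_n^3/c_n^2=o\big(n^{3/2}/(\log n)^{1/2}\big)$, then $(\sum_{i=1}^r\bar d_i)\,\tilde w_{11}\,(\sum_{i=1}^r\bar d_i)=o_p(1)$. (b) If $b_n^3/c_n^3=o(n^{1/2})$, then $(\sum_{i=1}^r\bar d_i)\,\tilde{\mathbf w}_{12}^\top\bar{\mathbf d}_2=o_p(1)$. (c) If $b_n^3/c_n^3=o(n^{3/4})$, then $\bar{\mathbf d}_2^\top(W_{22}-\widetilde W_{22})\bar{\mathbf d}_2=o_p(1)$.
   Context: $\beta$-model: $a_{ij}=a_{ji}\in\{0,1\}$, $1\le i<j\le n$, independent with $P(a_{ij}=1)=e^{\beta_i+\beta_j}/(1+e^{\beta_i+\beta_j})$, $a_{ii}=0$; $d_i=\sum_{j\ne i}a_{ij}$, $\bar d_i=d_i-\mathbb Ed_i$, $\bar{\mathbf d}_2=(\bar d_{r+1},\dots,\bar d_n)^\top$. $V=(v_{ij})$ with $v_{ij}=e^{\beta_i+\beta_j}/(1+e^{\beta_i+\beta_j})^2$ ($i\ne j$), $v_{ii}=\sum_{j\ne i}v_{ij}$; $S=\mathrm{diag}(1/v_{11},\dots,1/v_{nn})$; $W_{22}$ is the bottom-right $(n-r)\times(n-r)$ block of $V^{-1}-S$. $\widetilde{\mathbf d}=(\sum_{i=1}^rd_i,d_{r+1},\dots,d_n)^\top$, $\widetilde V=(\tilde v_{ij})$ its covariance matrix, $\widetilde S=\mathrm{diag}(1/\tilde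 v_{11},1/v_{r+1,r+1},\dots,1/v_{nn})$, and $\widetilde W=\widetilde V^{-1}-\widetilde S$ is partitioned as $\begin{pmatrix}\tilde w_{11}&\tilde{\mathbf w}_{12}^\top\\\tilde{\mathbf w}_{12}&\widetilde W_{22}\end{pmatrix}$ with $\tilde w_{11}$ a scalar and $\widetilde W_{22}$ of size $(n-r)\times(n-r)$. $b_n=\max_{i\neq j}(1+e^{\beta_i+\beta_j})^2/e^{\beta_i+\beta_j}$, $c_n=\min_{i\ne j}(\cdot)$. Asymptotics as $n\to\infty$. *)

theory Defs
  imports "HOL-Probability.Probability" "Jordan_Normal_Form.Matrix"
begin

text \<open>Beta-model on vertices 0..n-1 (the paper's 1..n shifted by one).
  A graph is encoded by the indicator of the upper-triangular pairs (i,j), i<j<n.\<close>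

definition pairs :: "nat \<Rightarrow> (nat \<times> nat) set" where
  "pairs n = {(i,j). i < j \<and> j < n}"

definition logistic :: "real \<Rightarrow> real" where
  "logistic x = exp x / (1 + exp x)"

definition beta_pmf :: "nat \<Rightarrow> (nat \<Rightarrow> real) \<Rightarrow> (nat \<times> nat \<Rightarrow> bool) pmf" where
  "beta_pmf n \<beta> = Pi_pmf (pairs n) False (\<lambda>(i,j). bernoulli_pmf (logistic (\<beta> i + \<beta> j)))"

definition adj :: "(nat \<times> nat \<Rightarrow> bool) \<Rightarrow> nat \<Rightarrow> nat \<Rightarrow> real" where
  "adj a i j = (if i < j then (if a (i,j) then 1 else 0)
               else if j < i then (if a (j,i) then 1 else 0) else 0)"

definition deg :: "nat \<Rightarrow> (nat \<times> nat \<Rightarrow> bool) \<Rightarrow> nat \<Rightarrow> real" where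
  "deg n a i = (\<Sum>j\<in>{..<n} - {i}. adj a i j)"

definition dbar :: "nat \<Rightarrow> (nat \<Rightarrow> real) \<Rightarrow> nat \<Rightarrow> (nat \<times> nat \<Rightarrow> bool) \<Rightarrow> real" where
  "dbar n \<beta> i a = deg n a i - measure_pmf.expectation (beta_pmf n \<beta>) (\<lambda>a. deg n a i)"

definition vv :: "(nat \<Rightarrow> real) \<Rightarrow> nat \<Rightarrow> nat \<Rightarrow> real" where
  "vv \<beta> i j = exp (\<beta> i + \<beta> j) / (1 + exp (\<beta> i + \<beta> j))^2"

definition Vmat :: "nat \<Rightarrow> (nat \<Rightarrow> real) \<Rightarrow> real mat" where
  "Vmat n \<beta> = mat n n (\<lambda>(i,j). if i = j then (\<Sum>k\<in>{..<n} - {i}. vv \<beta> i k) else vv \<beta> i j)"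

definition Smat :: "nat \<Rightarrow> (nat \<Rightarrow> real) \<Rightarrow> real mat" where
  "Smat n \<beta> = mat n n (\<lambda>(i,j). if i = j then 1 / (Vmat n \<beta> $$ (i,i)) else 0)"

text \<open>Matrix inverse (the matrices considered are invertible).\<close>
definition mat_inv :: "real mat \<Rightarrow> real mat" where
  "mat_inv A = (SOME B. inverts_mat A B \<and> inverts_mat B A)"

definition Wmat :: "nat \<Rightarrow> (nat \<Rightarrow> real) \<Rightarrow> real mat" where
  "Wmat n \<beta> = mat_inv (Vmat n \<beta>) - Smat n \<beta>"

definition W22 :: "nat \<Rightarrow> nat \<Rightarrow> (nat \<Rightarrow> real) \<Rightarrow> real mat" where
  "W22 n r \<beta> = mat (n - r) (n - r) (\<lambda>(i,j). Wmat n \<beta> $$ (r + i, r + j))"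

definition dtil :: "nat \<Rightarrow> nat \<Rightarrow> (nat \<times> nat \<Rightarrow> bool) \<Rightarrow> nat \<Rightarrow> real" where
  "dtil n r a k = (if k = 0 then (\<Sum>i<r. deg n a i) else deg n a (r + k - 1))"

definition Vtil :: "nat \<Rightarrow> nat \<Rightarrow> (nat \<Rightarrow> real) \<Rightarrow> real mat" where
  "Vtil n r \<beta> = mat (n - r + 1) (n - r + 1) (\<lambda>(k,l).
     measure_pmf.expectation (beta_pmf n \<beta>)
       (\<lambda>a. (dtil n r a k - measure_pmf.expectation (beta_pmf n \<beta>) (\<lambda>b. dtil n r b k)) *
            (dtil n r a l - measure_pmf.expectation (beta_pmf n \<beta>) (\<lambda>b. dtil n r b l))))"

definition Stil :: "nat \<Rightarrow> nat \<Rightarrow> (nat \<Rightarrow> real) \<Rightarrow> real mat" where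
  "Stil n r \<beta> = mat (n - r + 1) (n - r + 1) (\<lambda>(k,l).
     if k = l then (if k = 0 then 1 / (Vtil n r \<beta> $$ (0,0))
                    else 1 / (Vmat n \<beta> $$ (r + k - 1, r + k - 1)))
     else 0)"

definition Wtil :: "nat \<Rightarrow> nat \<Rightarrow> (nat \<Rightarrow> real) \<Rightarrow> real mat" where
  "Wtil n r \<beta> = mat_inv (Vtil n r \<beta>) - Stil n r \<beta>"

definition wtil11 :: "nat \<Rightarrow> nat \<Rightarrow> (nat \<Rightarrow> real) \<Rightarrow> real" where
  "wtil11 n r \<beta> = Wtil n r \<beta> $$ (0,0)"

definition wtil12 :: "nat \<Rightarrow> nat \<Rightarrow> (nat \<Rightarrow> real) \<Rightarrow> nat \<Rightarrow> real" where
  "wtil12 n r \<beta> j = Wtil n r \<beta> $$ (j + 1, 0)"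

definition Wtil22 :: "nat \<Rightarrow> nat \<Rightarrow> (nat \<Rightarrow> real) \<Rightarrow> real mat" where
  "Wtil22 n r \<beta> = mat (n - r) (n - r) (\<lambda>(i,j). Wtil n r \<beta> $$ (i + 1, j + 1))"

definition bn :: "nat \<Rightarrow> (nat \<Rightarrow> real) \<Rightarrow> real" where
  "bn n \<beta> = Max {(1 + exp (\<beta> i + \<beta> j))^2 / exp (\<beta> i + \<beta> j) | i j. i < n \<and> j < n \<and> i \<noteq> j}"

definition cn :: "nat \<Rightarrow> (nat \<Rightarrow> real) \<Rightarrow> real" where
  "cn n \<beta> = Min {(1 + exp (\<beta> i + \<beta> j))^2 / exp (\<beta> i + \<beta> j) | i j. i < n \<and> j < n \<and> i \<noteq> j}"

definition op1 :: "(nat \<Rightarrow> 'a pmf) \<Rightarrow> (nat \<Rightarrow> 'a \<Rightarrow> real) \<Rightarrow> bool" where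
  "op1 P X \<longleftrightarrow> (\<forall>\<epsilon>>0. ((\<lambda>n. measure_pmf.prob (P n) {a. \<bar>X n a\<bar> > \<epsilon>}) \<longlongrightarrow> 0) sequentially)"

end

theory Submission
  imports Defs "Jordan_Normal_Form.Determinant" "HOL-Real_Asymp.Real_Asymp"
begin


definition ind :: "(nat \<times> nat \<Rightarrow> bool) \<Rightarrow> nat \<times> nat \<Rightarrow> real" where
  "ind a e = (if a e then 1 else 0)"
definition pp :: "(nat \<Rightarrow> real) \<Rightarrow> nat \<times> nat \<Rightarrow> real" where
  "pp \<beta> e = logistic (\<beta> (fst e) + \<beta> (snd e))"
definition xi :: "(nat \<Rightarrow> real) \<Rightarrow> (nat \<times> nat \<Rightarrow> bool) \<Rightarrow> nat \<times> nat \<Rightarrow> real" where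
  "xi \<beta> a e = ind a e - pp \<beta> e"
definition ve :: "(nat \<Rightarrow> real) \<Rightarrow> nat \<times> nat \<Rightarrow> real" where
  "ve \<beta> e = vv \<beta> (fst e) (snd e)"

lemma finite_pairs[simp]: "finite (pairs n)"
proof -
  have "pairs n \<subseteq> {..<n} \<times> {..<n}" by (auto simp: pairs_def)
  thus ?thesis by (rule finite_subset) auto
qed

lemma fin_beta: "finite (set_pmf (beta_pmf n \<beta>))"
proof -
  have "set_pmf (beta_pmf n \<beta>) \<subseteq> PiE_dflt (pairs n) False (set_pmf \<circ> (\<lambda>(i,j). bernoulli_pmf (logistic (\<beta> i + \<beta> j))))"
    unfolding beta_pmf_def by (rule set_Pi_pmf_subset') simp
  moreover have "finite (PiE_dflt (pairs n) False (set_pmf \<circ> (\<lambda>(i,j). bernoulli_pmf (logistic (\<beta> i + \<beta> j)))))"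
    by (intro finite_PiE_dflt) auto
  ultimately show ?thesis by (rule finite_subset)
qed

lemma integ[simp]: "integrable (measure_pmf (beta_pmf n \<beta>)) (f :: _ \<Rightarrow> real)"
  by (rule integrable_measure_pmf_finite[OF fin_beta])

lemma logistic_01: "0 \<le> logistic x" "logistic x \<le> 1"
  unfolding logistic_def by (auto simp: add_pos_nonneg)

lemma logistic_var: "logistic x * (1 - logistic x) = exp x / (1 + exp x)^2"
proof -
  have "1 + exp x > 0" by (simp add: add_pos_pos)
  thus ?thesis unfolding logistic_def by (simp add: field_simps power2_eq_square)
qed

lemma ve_pp: "ve \<beta> e = pp \<beta> e * (1 - pp \<beta> e)"
  unfolding ve_def pp_def vv_def using logistic_var by simp

lemma E_ind:
  assumes "e \<in> pairs n"
  shows "measure_pmf.expectation (beta_pmf n \<beta>) (\<lambda>a. ind a e) = pp \<beta> e"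
proof -
  have "measure_pmf.expectation (beta_pmf n \<beta>) (\<lambda>a. ind a e)
      = measure_pmf.expectation (map_pmf (\<lambda>a. a e) (beta_pmf n \<beta>)) (\<lambda>b. if b then 1 else 0)"
    by (simp add: ind_def)
  also have "map_pmf (\<lambda>a. a e) (beta_pmf n \<beta>) = bernoulli_pmf (pp \<beta> e)"
    unfolding beta_pmf_def using assms by (subst Pi_pmf_component) (auto simp: pp_def case_prod_unfold)
  finally show ?thesis using logistic_01 by (simp add: pp_def)
qed

lemma E_ind2:
  assumes "e \<in> pairs n" "f \<in> pairs n" "e \<noteq> f"
  shows "measure_pmf.expectation (beta_pmf n \<beta>) (\<lambda>a. ind a e * ind a f) = pp \<beta> e * pp \<beta> f"
proof -
  define g where "g = (\<lambda>x (b::bool). if x = e \<or> x = f then (if b then 1 else 0) else (1::real))"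
  have eq: "ind a e * ind a f = (\<Prod>x\<in>pairs n. g x (a x))" for a
  proof -
    have "(\<Prod>x\<in>pairs n. g x (a x)) = (\<Prod>x\<in>{e,f}. g x (a x))"
      by (rule prod.mono_neutral_right) (use assms in \<open>auto simp: g_def\<close>)
    also have "\<dots> = ind a e * ind a f" using assms by (simp add: g_def ind_def)
    finally show ?thesis by simp
  qed
  have "measure_pmf.expectation (beta_pmf n \<beta>) (\<lambda>a. ind a e * ind a f)
     = (\<Prod>x\<in>pairs n. measure_pmf.expectation ((\<lambda>(i,j). bernoulli_pmf (logistic (\<beta> i + \<beta> j))) x) (g x))"
    unfolding eq beta_pmf_def
    by (rule expectation_prod_Pi_pmf) (auto simp: g_def integrable_measure_pmf_finite)
  also have "\<dots> = (\<Prod>x\<in>{e,f}. measure_pmf.expectation ((\<lambda>(i,j). bernoulli_pmf (logistic (\<beta> i + \<beta> j))) x) (g x))"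
    by (rule prod.mono_neutral_left[symmetric]) (use assms logistic_01 in \<open>auto simp: g_def case_prod_unfold\<close>)
  also have "\<dots> = pp \<beta> e * pp \<beta> f"
    using assms logistic_01 by (simp add: g_def case_prod_unfold pp_def)
  finally show ?thesis .
qed

lemma E_xi2:
  assumes "e \<in> pairs n" "f \<in> pairs n"
  shows "measure_pmf.expectation (beta_pmf n \<beta>) (\<lambda>a. xi \<beta> a e * xi \<beta> a f) = (if e = f then ve \<beta> e else 0)"
proof -
  have d: "xi \<beta> a e * xi \<beta> a f = ind a e * ind a f - pp \<beta> f * ind a e - pp \<beta> e * ind a f + pp \<beta> e * pp \<beta> f" for a
    by (simp add: xi_def algebra_simps)
  show ?thesis
  proof (cases "e = f")
    case True
    have d2: "xi \<beta> a e * xi \<beta> a f = (1 - 2 * pp \<beta> e) * ind a e + pp \<beta> e * pp \<beta> e" for a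
      using True by (simp add: xi_def ind_def algebra_simps)
    show ?thesis unfolding d2 using True assms
      by (simp add: E_ind ve_pp algebra_simps)
  next
    case False
    then show ?thesis using assms by (simp add: d E_ind E_ind2)
  qed
qed

lemma edge_cov:
  "measure_pmf.expectation (beta_pmf n \<beta>)
     (\<lambda>a. (\<Sum>e\<in>pairs n. w e * xi \<beta> a e) * (\<Sum>f\<in>pairs n. w' f * xi \<beta> a f))
   = (\<Sum>e\<in>pairs n. w e * w' e * ve \<beta> e)"
proof -
  have "(\<lambda>a. (\<Sum>e\<in>pairs n. w e * xi \<beta> a e) * (\<Sum>f\<in>pairs n. w' f * xi \<beta> a f))
      = (\<lambda>a. \<Sum>e\<in>pairs n. \<Sum>f\<in>pairs n. w e * w' f * (xi \<beta> a e * xi \<beta> a f))"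
    by (simp add: sum_product algebra_simps)
  hence "measure_pmf.expectation (beta_pmf n \<beta>)
     (\<lambda>a. (\<Sum>e\<in>pairs n. w e * xi \<beta> a e) * (\<Sum>f\<in>pairs n. w' f * xi \<beta> a f))
     = (\<Sum>e\<in>pairs n. \<Sum>f\<in>pairs n. w e * w' f * measure_pmf.expectation (beta_pmf n \<beta>) (\<lambda>a. xi \<beta> a e * xi \<beta> a f))"
    by simp
  also have "\<dots> = (\<Sum>e\<in>pairs n. \<Sum>f\<in>pairs n. w e * w' f * (if e = f then ve \<beta> e else 0))"
    by (intro sum.cong refl) (simp add: E_xi2)
  also have "\<dots> = (\<Sum>e\<in>pairs n. w e * w' e * ve \<beta> e)"
    by (simp add: if_distrib cong: if_cong)
  finally show ?thesis .
qed



definition srt :: "nat \<Rightarrow> nat \<Rightarrow> nat \<times> nat" where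
  "srt i k = (if i < k then (i,k) else (k,i))"
definition mem :: "nat \<Rightarrow> nat \<times> nat \<Rightarrow> real" where
  "mem i e = (if fst e = i \<or> snd e = i then 1 else 0)"
definition ew :: "(nat \<Rightarrow> real) \<Rightarrow> nat \<times> nat \<Rightarrow> real" where
  "ew y e = y (fst e) + y (snd e)"

lemma vv_sym: "vv \<beta> i k = vv \<beta> k i"
  unfolding vv_def by (simp add: add.commute)

lemma star:
  assumes "i < n"
  shows "(\<Sum>e\<in>pairs n. mem i e * g e) = (\<Sum>k\<in>{..<n}-{i}. g (srt i k))"
proof -
  have "(\<Sum>e\<in>pairs n. mem i e * g e) = (\<Sum>e\<in>pairs n. if fst e = i \<or> snd e = i then g e else 0)"
    by (intro sum.cong) (auto simp: mem_def)
  also have "\<dots> = (\<Sum>e\<in>{e\<in>pairs n. fst e = i \<or> snd e = i}. g e)"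
    by (simp add: sum.inter_filter)
  also have "{e\<in>pairs n. fst e = i \<or> snd e = i} = srt i ` ({..<n}-{i})"
  proof (intro equalityI subsetI)
    fix e assume "e \<in> {e\<in>pairs n. fst e = i \<or> snd e = i}"
    then obtain a b where e: "e = (a,b)" "a < b" "b < n" "a = i \<or> b = i" by (cases e) (auto simp: pairs_def)
    show "e \<in> srt i ` ({..<n}-{i})"
    proof (cases "a = i")
      case True thus ?thesis using e by (intro image_eqI[of _ _ b]) (auto simp: srt_def)
    next
      case False thus ?thesis using e by (intro image_eqI[of _ _ a]) (auto simp: srt_def)
    qed
  next
    fix e assume "e \<in> srt i ` ({..<n}-{i})"
    thus "e \<in> {e\<in>pairs n. fst e = i \<or> snd e = i}" using assms by (auto simp: srt_def pairs_def)
  qed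
  also have "(\<Sum>e\<in>srt i ` ({..<n}-{i}). g e) = (\<Sum>k\<in>{..<n}-{i}. g (srt i k))"
    by (rule sum.reindex_cong[of "srt i"]) (auto simp: inj_on_def srt_def split: if_splits)
  finally show ?thesis .
qed

lemma adj_srt: "k \<noteq> i \<Longrightarrow> adj a i k = ind a (srt i k)"
  by (auto simp: adj_def ind_def srt_def)

lemma deg_edge: "i < n \<Longrightarrow> deg n a i = (\<Sum>e\<in>pairs n. mem i e * ind a e)"
  unfolding deg_def by (subst star) (auto intro!: sum.cong simp: adj_srt)

lemma E_deg: "i < n \<Longrightarrow> measure_pmf.expectation (beta_pmf n \<beta>) (\<lambda>a. deg n a i) = (\<Sum>e\<in>pairs n. mem i e * pp \<beta> e)"
  by (simp add: deg_edge E_ind)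

lemma dbar_edge: assumes "i < n" shows "dbar n \<beta> i a = (\<Sum>e\<in>pairs n. mem i e * xi \<beta> a e)"
proof -
  have "dbar n \<beta> i a = (\<Sum>e\<in>pairs n. mem i e * ind a e) - (\<Sum>e\<in>pairs n. mem i e * pp \<beta> e)"
    unfolding dbar_def by (subst E_deg[OF assms], subst deg_edge[OF assms], rule refl)
  also have "\<dots> = (\<Sum>e\<in>pairs n. mem i e * xi \<beta> a e)"
    by (simp add: sum_subtractf[symmetric] right_diff_distrib xi_def)
  finally show ?thesis .
qed

lemma sum_mem:
  assumes "e \<in> pairs n"
  shows "(\<Sum>i<n. y i * mem i e) = ew y e"
proof -
  have "mem i e = (if i = fst e then 1 else 0) + (if i = snd e then 1 else 0)" for i
    using assms by (auto simp: mem_def pairs_def)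
  hence "(\<Sum>i<n. y i * mem i e) = (\<Sum>i<n. (if i = fst e then y i else 0)) + (\<Sum>i<n. (if i = snd e then y i else 0))"
    by (simp only: sum.distrib[symmetric] distrib_left) (intro sum.cong refl, auto)
  also have "\<dots> = ew y e"
  proof -
    have "fst e < n" "snd e < n" using assms by (auto simp: pairs_def)
    thus ?thesis by (simp add: ew_def)
  qed
  finally show ?thesis .
qed

lemma L_edge: "(\<Sum>i<n. y i * dbar n \<beta> i a) = (\<Sum>e\<in>pairs n. ew y e * xi \<beta> a e)"
proof -
  have "(\<Sum>i<n. y i * dbar n \<beta> i a) = (\<Sum>i<n. \<Sum>e\<in>pairs n. y i * mem i e * xi \<beta> a e)"
    by (simp add: dbar_edge sum_distrib_left mult.assoc)
  also have "\<dots> = (\<Sum>e\<in>pairs n. (\<Sum>i<n. y i * mem i e) * xi \<beta> a e)"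
    by (subst sum.swap) (simp add: sum_distrib_right)
  also have "\<dots> = (\<Sum>e\<in>pairs n. ew y e * xi \<beta> a e)"
    by (intro sum.cong refl) (simp add: sum_mem)
  finally show ?thesis .
qed

lemma EL:
  "measure_pmf.expectation (beta_pmf n \<beta>) (\<lambda>a. (\<Sum>i<n. x i * dbar n \<beta> i a) * (\<Sum>i<n. y i * dbar n \<beta> i a))
   = (\<Sum>e\<in>pairs n. ew x e * ew y e * ve \<beta> e)"
  unfolding L_edge by (rule edge_cov)

lemma pairs_sum: "(\<Sum>e\<in>pairs n. f e) = (\<Sum>l<n. \<Sum>k<l. f (k,l))"
proof -
  have "pairs n = (\<lambda>(l,k). (k,l)) ` (SIGMA l:{..<n}. {..<l})"
    by (auto simp: pairs_def image_iff)
  hence "(\<Sum>e\<in>pairs n. f e) = (\<Sum>x\<in>(SIGMA l:{..<n}. {..<l}). f (snd x, fst x))"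
    by (simp add: sum.reindex inj_on_def case_prod_unfold)
  also have "\<dots> = (\<Sum>l<n. \<Sum>k<l. f (k,l))"
    by (rule sum.Sigma[symmetric, unfolded case_prod_unfold]) auto
  finally show ?thesis .
qed

lemma ve_srt: "k \<noteq> i \<Longrightarrow> ve \<beta> (srt i k) = vv \<beta> i k"
  by (auto simp: ve_def srt_def vv_sym)

lemma ew_srt: "ew z (srt i k) = z i + z k"
  by (auto simp: ew_def srt_def)

lemma Vrow:
  assumes "i < n"
  shows "(\<Sum>j<n. Vmat n \<beta> $$ (i,j) * z j) = (\<Sum>e\<in>pairs n. mem i e * (ew z e * ve \<beta> e))"
proof -
  have "(\<Sum>j<n. Vmat n \<beta> $$ (i,j) * z j) = Vmat n \<beta> $$ (i,i) * z i + (\<Sum>j\<in>{..<n}-{i}. Vmat n \<beta> $$ (i,j) * z j)"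
    using assms by (subst sum.remove[of _ i]) auto
  also have "\<dots> = (\<Sum>k\<in>{..<n}-{i}. vv \<beta> i k) * z i + (\<Sum>j\<in>{..<n}-{i}. vv \<beta> i j * z j)"
    using assms by (simp add: Vmat_def)
  also have "\<dots> = (\<Sum>k\<in>{..<n}-{i}. (z i + z k) * vv \<beta> i k)"
    by (simp add: sum_distrib_left sum.distrib algebra_simps)
  also have "\<dots> = (\<Sum>e\<in>pairs n. mem i e * (ew z e * ve \<beta> e))"
    using assms by (subst star) (auto intro!: sum.cong simp: ew_srt ve_srt)
  finally show ?thesis .
qed



definition FF :: "nat \<Rightarrow> (nat \<Rightarrow> nat \<Rightarrow> real) \<Rightarrow> (nat \<Rightarrow> real) \<Rightarrow> real" where
  "FF n v y = (\<Sum>l<n. \<Sum>k<l. (y k + y l)^2 * v k l)"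

lemma FF_decomp:
  assumes "r \<le> n" "\<And>k. k < r \<Longrightarrow> y k = a"
  shows "FF n v y = a^2 * (\<Sum>l<r. \<Sum>k<l. 4 * v k l)
     + (\<Sum>l\<in>{r..<n}. \<Sum>k<r. (a + y l)^2 * v k l)
     + (\<Sum>l\<in>{r..<n}. \<Sum>k\<in>{r..<l}. (y k + y l)^2 * v k l)"
proof -
  have U: "{..<n} = {..<r} \<union> {r..<n}" using assms(1) by auto
  have "FF n v y = (\<Sum>l<r. \<Sum>k<l. (y k + y l)^2 * v k l) + (\<Sum>l\<in>{r..<n}. \<Sum>k<l. (y k + y l)^2 * v k l)"
    unfolding FF_def U by (rule sum.union_disjoint) auto
  also have "(\<Sum>l<r. \<Sum>k<l. (y k + y l)^2 * v k l) = a^2 * (\<Sum>l<r. \<Sum>k<l. 4 * v k l)"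
    using assms(2) by (simp add: sum_distrib_left power2_eq_square algebra_simps)
  also have "(\<Sum>l\<in>{r..<n}. \<Sum>k<l. (y k + y l)^2 * v k l)
     = (\<Sum>l\<in>{r..<n}. \<Sum>k<r. (a + y l)^2 * v k l) + (\<Sum>l\<in>{r..<n}. \<Sum>k\<in>{r..<l}. (y k + y l)^2 * v k l)"
  proof -
    have "(\<Sum>k<l. (y k + y l)^2 * v k l) = (\<Sum>k<r. (a + y l)^2 * v k l) + (\<Sum>k\<in>{r..<l}. (y k + y l)^2 * v k l)"
      if "l \<in> {r..<n}" for l
    proof -
      have U2: "{..<l} = {..<r} \<union> {r..<l}" using that by auto
      show ?thesis unfolding U2 by (subst sum.union_disjoint) (auto simp: assms(2))
    qed
    thus ?thesis by (simp add: sum.distrib)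
  qed
  finally show ?thesis by simp
qed

lemma tri_identity:
  assumes "r \<le> n"
  shows "(\<Sum>l\<in>{r..<n}. \<Sum>k\<in>{r..<l}. (y k + y l)^2)
       = (real n - real r - 2) * (\<Sum>l\<in>{r..<n}. (y l)^2) + (\<Sum>l\<in>{r..<n}. y l)^2"
  using assms
proof (induction n)
  case 0 thus ?case by simp
next
  case (Suc n)
  show ?case
  proof (cases "r = Suc n")
    case True thus ?thesis by simp
  next
    case False
    hence rn: "r \<le> n" using Suc.prems by simp
    have ins: "{r..<Suc n} = insert n {r..<n}" using rn by auto
    have inner: "(\<Sum>k\<in>{r..<n}. (y k + y n)^2) = (\<Sum>k\<in>{r..<n}. (y k)^2) + 2 * y n * (\<Sum>k\<in>{r..<n}. y k) + (real n - real r) * (y n)^2"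
      using rn by (simp add: power2_sum sum.distrib sum_distrib_left sum_distrib_right algebra_simps of_nat_diff)
    show ?thesis unfolding ins using Suc.IH[OF rn] inner
      by (simp add: power2_sum algebra_simps)
  qed
qed

lemma quad_aux:
  fixes B \<alpha> a t :: real
  assumes "B > 0" "\<alpha> \<ge> 0"
  shows "\<alpha> * (a + t)^2 + B * t^2 \<ge> a^2 * (\<alpha> - \<alpha>^2 / B)"
proof -
  define q where "q = \<alpha> / B"
  have Bn: "B \<noteq> 0" using assms by simp
  have q0: "q \<ge> 0" unfolding q_def using assms by simp
  have al: "\<alpha> = q * B" unfolding q_def using Bn by simp
  have "\<alpha> * (a + t)^2 + B * t^2 - a^2 * (\<alpha> - \<alpha>^2 / B) = B * (q * t^2 + (t + q * a)^2)"
    unfolding al using assms by (simp add: power2_eq_square algebra_simps)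
  also have "\<dots> \<ge> 0" using assms q0 by (intro mult_nonneg_nonneg add_nonneg_nonneg) auto
  finally show ?thesis by simp
qed

lemma FF_lower:
  assumes rn: "r + 3 \<le> n" and r0: "r > 0"
    and vb: "\<And>k l. k < l \<Longrightarrow> l < n \<Longrightarrow> 1 / b \<le> v k l \<and> v k l \<le> 1 / c"
    and b0: "b > 0" and c0: "c > 0"
    and y: "\<And>k. k < r \<Longrightarrow> y k = y 0"
  shows "FF n v y \<ge> (1 - r * b / (c * (real n - real r - 2))) * FF n v (\<lambda>k. if k < r then 1 else 0) * (y 0)^2"
proof -
  define B where "B = (real n - real r - 2) / b"
  define \<epsilon> where "\<epsilon> = r * b / (c * (real n - real r - 2))"
  define \<alpha> where "\<alpha> l = (\<Sum>k<r. v k l)" for l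
  define I4 where "I4 = (\<Sum>l<r. \<Sum>k<l. 4 * v k l)"
  have m2: "real n - real r - 2 \<ge> 1" using rn by linarith
  have B0: "B > 0" using m2 b0 by (simp add: B_def)
  have eps0: "\<epsilon> \<ge> 0" using m2 b0 c0 by (simp add: \<epsilon>_def)
  have vnn: "v k l \<ge> 0" if "k < l" "l < n" for k l
  proof -
    have "1 / b > 0" using b0 by simp
    with vb[OF that] show ?thesis by linarith
  qed
  have I4: "I4 \<ge> 0" unfolding I4_def
  proof (intro sum_nonneg)
    fix l k assume "l \<in> {..<r}" "k \<in> {..<l}"
    hence "k < l" "l < n" using rn by auto
    thus "0 \<le> 4 * v k l" using vnn by simp
  qed
  have al0: "\<alpha> l \<ge> 0" if "l \<in> {r..<n}" for l
    unfolding \<alpha>_def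
  proof (intro sum_nonneg)
    fix k assume "k \<in> {..<r}"
    hence "k < l" "l < n" using that by auto
    thus "0 \<le> v k l" using vnn by simp
  qed
  have alr: "\<alpha> l \<le> r / c" if "l \<in> {r..<n}" for l
  proof -
    have "\<alpha> l \<le> (\<Sum>k<r. 1 / c)" unfolding \<alpha>_def
    proof (intro sum_mono)
      fix k assume "k \<in> {..<r}"
      hence "k < l" "l < n" using that by auto
      thus "v k l \<le> 1 / c" using vb by blast
    qed
    thus ?thesis by simp
  qed
  have sig: "FF n v (\<lambda>k. if k < r then 1 else 0) = I4 + (\<Sum>l\<in>{r..<n}. \<alpha> l)"
    using rn by (subst FF_decomp[where r = r and a = 1]) (auto simp: I4_def \<alpha>_def sum_distrib_left)
  have dec: "FF n v y = (y 0)^2 * I4 + (\<Sum>l\<in>{r..<n}. \<alpha> l * (y 0 + y l)^2)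
     + (\<Sum>l\<in>{r..<n}. \<Sum>k\<in>{r..<l}. (y k + y l)^2 * v k l)"
  proof -
    have "(\<Sum>l\<in>{r..<n}. \<Sum>k<r. (y 0 + y l)^2 * v k l) = (\<Sum>l\<in>{r..<n}. \<alpha> l * (y 0 + y l)^2)"
      unfolding \<alpha>_def by (intro sum.cong refl) (simp add: sum_distrib_right mult.commute)
    moreover note FF_decomp[where r = r and a = "y 0" and y = y and n = n and v = v, OF _ y]
    ultimately show ?thesis using rn unfolding I4_def by simp
  qed
  have bot: "(\<Sum>l\<in>{r..<n}. \<Sum>k\<in>{r..<l}. (y k + y l)^2 * v k l) \<ge> B * (\<Sum>l\<in>{r..<n}. (y l)^2)"
  proof -
    have "(\<Sum>l\<in>{r..<n}. \<Sum>k\<in>{r..<l}. (y k + y l)^2 * v k l) \<ge> (\<Sum>l\<in>{r..<n}. \<Sum>k\<in>{r..<l}. (y k + y l)^2 * (1/b))"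
      by (intro sum_mono mult_left_mono) (use vb in auto)
    also have "(\<Sum>l\<in>{r..<n}. \<Sum>k\<in>{r..<l}. (y k + y l)^2 * (1/b)) = (1/b) * (\<Sum>l\<in>{r..<n}. \<Sum>k\<in>{r..<l}. (y k + y l)^2)"
      by (simp add: sum_distrib_left mult.commute)
    also have "\<dots> = (1/b) * ((real n - real r - 2) * (\<Sum>l\<in>{r..<n}. (y l)^2) + (\<Sum>l\<in>{r..<n}. y l)^2)"
      using rn by (subst tri_identity) auto
    also have "\<dots> \<ge> B * (\<Sum>l\<in>{r..<n}. (y l)^2)"
      using b0 by (simp add: B_def field_simps)
    finally show ?thesis .
  qed
  have mid: "\<alpha> l * (y 0 + y l)^2 + B * (y l)^2 \<ge> (y 0)^2 * (1 - \<epsilon>) * \<alpha> l" if l: "l \<in> {r..<n}" for l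
  proof -
    have "\<alpha> l * (y 0 + y l)^2 + B * (y l)^2 \<ge> (y 0)^2 * (\<alpha> l - (\<alpha> l)^2 / B)"
      by (rule quad_aux[OF B0 al0[OF l]])
    moreover have "(\<alpha> l)^2 / B \<le> \<epsilon> * \<alpha> l"
    proof -
      have "(\<alpha> l)^2 / B = \<alpha> l * (\<alpha> l / B)" by (simp add: power2_eq_square)
      also have "\<alpha> l / B \<le> (r / c) / B" using alr[OF l] B0 by (intro divide_right_mono) auto
      hence "\<alpha> l * (\<alpha> l / B) \<le> \<alpha> l * ((r / c) / B)" using al0[OF l] by (rule mult_left_mono)
      also have "(r / c) / B = \<epsilon>" using m2 b0 c0 by (simp add: B_def \<epsilon>_def field_simps)
      finally show ?thesis by (simp add: mult.commute)
    qed
    moreover have "(y 0)^2 * (\<alpha> l - (\<alpha> l)^2 / B) \<ge> (y 0)^2 * (\<alpha> l - \<epsilon> * \<alpha> l)"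
      using calculation(2) by (intro mult_left_mono) auto
    ultimately show ?thesis by (simp add: algebra_simps)
  qed
  have s1: "FF n v y \<ge> (y 0)^2 * I4 + (\<Sum>l\<in>{r..<n}. \<alpha> l * (y 0 + y l)^2 + B * (y l)^2)"
    using dec bot by (simp add: sum.distrib sum_distrib_left)
  have s2: "(\<Sum>l\<in>{r..<n}. \<alpha> l * (y 0 + y l)^2 + B * (y l)^2) \<ge> (\<Sum>l\<in>{r..<n}. (y 0)^2 * (1 - \<epsilon>) * \<alpha> l)"
    by (intro sum_mono mid) auto
  have "FF n v y \<ge> (y 0)^2 * I4 + (y 0)^2 * (1 - \<epsilon>) * (\<Sum>l\<in>{r..<n}. \<alpha> l)"
    using s1 s2 by (simp add: sum_distrib_left)
  moreover have "(y 0)^2 * I4 \<ge> (y 0)^2 * (1 - \<epsilon>) * I4"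
  proof -
    have "(1 - \<epsilon>) * I4 \<le> I4" using eps0 I4 by (simp add: mult_le_cancel_right1 algebra_simps)
    hence "(y 0)^2 * ((1 - \<epsilon>) * I4) \<le> (y 0)^2 * I4" by (intro mult_left_mono) auto
    thus ?thesis by (simp add: mult.assoc)
  qed
  ultimately show ?thesis unfolding sig \<epsilon>_def[symmetric] by (simp add: algebra_simps)
qed



definition up :: "nat \<Rightarrow> (nat \<Rightarrow> real) \<Rightarrow> nat \<Rightarrow> real" where
  "up r u i = (if i < r then u 0 else u (i - r + 1))"
definition dl :: "nat \<Rightarrow> nat \<Rightarrow> real" where
  "dl k = (\<lambda>l. if l = k then 1 else 0)"
definition Yt :: "nat \<Rightarrow> nat \<Rightarrow> (nat \<Rightarrow> real) \<Rightarrow> nat \<Rightarrow> (nat \<times> nat \<Rightarrow> bool) \<Rightarrow> real" where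
  "Yt n r \<beta> k a = dtil n r a k - measure_pmf.expectation (beta_pmf n \<beta>) (\<lambda>b. dtil n r b k)"
definition Tf :: "nat \<Rightarrow> nat \<Rightarrow> (nat \<Rightarrow> real) \<Rightarrow> (nat \<Rightarrow> real) \<Rightarrow> (nat \<times> nat \<Rightarrow> bool) \<Rightarrow> real" where
  "Tf n r \<beta> u a = (\<Sum>k\<le>n - r. u k * Yt n r \<beta> k a)"

lemma sum_delta_mult[simp]:
  "finite A \<Longrightarrow> (\<Sum>k\<in>A. f k * (if k = a then 1 else 0)) = (if a \<in> A then f a else (0::real))"
  "finite A \<Longrightarrow> (\<Sum>k\<in>A. (if k = a then 1 else 0) * f k) = (if a \<in> A then f a else (0::real))"
  "finite A \<Longrightarrow> (\<Sum>k\<in>A. f k * (if a = k then 1 else 0)) = (if a \<in> A then f a else (0::real))"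
  "finite A \<Longrightarrow> (\<Sum>k\<in>A. (if a = k then 1 else 0) * f k) = (if a \<in> A then f a else (0::real))"
  by (simp_all add: if_distrib[of "\<lambda>x. f _ * x"] if_distrib[of "\<lambda>x. x * f _"] cong: if_cong)

abbreviation EE where "EE n \<beta> f \<equiv> measure_pmf.expectation (beta_pmf n \<beta>) f"

lemma Yt0: "r \<le> n \<Longrightarrow> Yt n r \<beta> 0 a = (\<Sum>i<r. dbar n \<beta> i a)"
  by (simp add: Yt_def dtil_def dbar_def sum_subtractf)

lemma Ytk: "0 < k \<Longrightarrow> Yt n r \<beta> k a = dbar n \<beta> (r + k - 1) a"
  by (simp add: Yt_def dtil_def dbar_def)

lemma Yt_L:
  assumes "r \<le> n" "k \<le> n - r" "0 < r"
  shows "Yt n r \<beta> k a = (\<Sum>i<n. up r (dl k) i * dbar n \<beta> i a)"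
proof (cases "k = 0")
  case True
  have "(\<Sum>i<n. up r (dl k) i * dbar n \<beta> i a) = (\<Sum>i<n. if i < r then dbar n \<beta> i a else 0)"
    using True by (intro sum.cong refl) (auto simp: up_def dl_def)
  also have "\<dots> = (\<Sum>i\<in>{..<n} \<inter> {i. i < r}. dbar n \<beta> i a)"
    by (simp add: sum.inter_restrict)
  also have "{..<n} \<inter> {i. i < r} = {..<r}" using assms by auto
  finally show ?thesis using True assms by (simp add: Yt0)
next
  case False
  have "(\<Sum>i<n. up r (dl k) i * dbar n \<beta> i a) = (\<Sum>i<n. if i = r + k - 1 then dbar n \<beta> i a else 0)"
    using False by (intro sum.cong refl) (auto simp: up_def dl_def)
  also have "\<dots> = dbar n \<beta> (r + k - 1) a" using assms False by simp
  finally show ?thesis using False by (simp add: Ytk)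
qed

lemma up_sum:
  assumes "i < n" "r \<le> n"
  shows "(\<Sum>k\<le>n - r. u k * up r (dl k) i) = up r u i"
proof (cases "i < r")
  case True thus ?thesis by (simp add: up_def dl_def)
next
  case False
  hence "i - r + 1 \<le> n - r" using assms by auto
  thus ?thesis using False by (simp add: up_def dl_def)
qed

lemma Tf_L:
  assumes "r \<le> n" "0 < r"
  shows "Tf n r \<beta> u a = (\<Sum>i<n. up r u i * dbar n \<beta> i a)"
proof -
  have "Tf n r \<beta> u a = (\<Sum>k\<le>n - r. \<Sum>i<n. u k * up r (dl k) i * dbar n \<beta> i a)"
    unfolding Tf_def using assms by (intro sum.cong refl) (simp add: Yt_L sum_distrib_left mult.assoc)
  also have "\<dots> = (\<Sum>i<n. (\<Sum>k\<le>n - r. u k * up r (dl k) i) * dbar n \<beta> i a)"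
    by (subst sum.swap) (simp add: sum_distrib_right)
  also have "\<dots> = (\<Sum>i<n. up r u i * dbar n \<beta> i a)"
    using assms by (intro sum.cong refl) (simp add: up_sum)
  finally show ?thesis .
qed

lemma Vt_entry:
  assumes "k \<le> n - r" "l \<le> n - r"
  shows "Vtil n r \<beta> $$ (k,l) = EE n \<beta> (\<lambda>a. Yt n r \<beta> k a * Yt n r \<beta> l a)"
  using assms unfolding Vtil_def Yt_def by simp

lemma Vt_row:
  assumes "k \<le> n - r"
  shows "(\<Sum>l\<le>n - r. Vtil n r \<beta> $$ (k,l) * u l) = EE n \<beta> (\<lambda>a. Yt n r \<beta> k a * Tf n r \<beta> u a)"
proof -
  have "(\<Sum>l\<le>n - r. Vtil n r \<beta> $$ (k,l) * u l) = (\<Sum>l\<le>n - r. EE n \<beta> (\<lambda>a. u l * (Yt n r \<beta> k a * Yt n r \<beta> l a)))"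
    using assms by (intro sum.cong refl) (simp add: Vt_entry mult.commute)
  also have "\<dots> = EE n \<beta> (\<lambda>a. \<Sum>l\<le>n - r. u l * (Yt n r \<beta> k a * Yt n r \<beta> l a))"
    by simp
  also have "\<dots> = EE n \<beta> (\<lambda>a. Yt n r \<beta> k a * Tf n r \<beta> u a)"
    unfolding Tf_def by (simp add: sum_distrib_left algebra_simps)
  finally show ?thesis .
qed

lemma ET:
  "EE n \<beta> (\<lambda>a. Tf n r \<beta> u a * Tf n r \<beta> u' a) = (\<Sum>k\<le>n - r. u k * (\<Sum>l\<le>n - r. Vtil n r \<beta> $$ (k,l) * u' l))"
proof -
  have "EE n \<beta> (\<lambda>a. Tf n r \<beta> u a * Tf n r \<beta> u' a) = EE n \<beta> (\<lambda>a. \<Sum>k\<le>n - r. u k * (Yt n r \<beta> k a * Tf n r \<beta> u' a))"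
    unfolding Tf_def[of n r \<beta> u] by (simp add: sum_distrib_right mult.assoc)
  also have "\<dots> = (\<Sum>k\<le>n - r. u k * EE n \<beta> (\<lambda>a. Yt n r \<beta> k a * Tf n r \<beta> u' a))"
    by simp
  also have "\<dots> = (\<Sum>k\<le>n - r. u k * (\<Sum>l\<le>n - r. Vtil n r \<beta> $$ (k,l) * u' l))"
    by (intro sum.cong refl) (simp add: Vt_row)
  finally show ?thesis .
qed

lemma ET_edge:
  assumes "r \<le> n" "0 < r"
  shows "EE n \<beta> (\<lambda>a. Tf n r \<beta> u a * Tf n r \<beta> u' a) = (\<Sum>e\<in>pairs n. ew (up r u) e * ew (up r u') e * ve \<beta> e)"
  unfolding Tf_L[OF assms] by (rule EL)

lemma edge_FF: "(\<Sum>e\<in>pairs n. ew y e * ew y e * ve \<beta> e) = FF n (vv \<beta>) y"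
  unfolding pairs_sum FF_def by (simp add: ew_def ve_def power2_eq_square)

lemma ET_FF:
  assumes "r \<le> n" "0 < r"
  shows "EE n \<beta> (\<lambda>a. Tf n r \<beta> u a * Tf n r \<beta> u a) = FF n (vv \<beta>) (up r u)"
  using ET_edge[OF assms] edge_FF by simp

lemma up_dl0: "up r (dl 0) = (\<lambda>k. if k < r then 1 else 0)"
  by (auto simp: up_def dl_def fun_eq_iff)

lemma Tf_dl0: "r \<le> n \<Longrightarrow> Tf n r \<beta> (dl 0) a = Yt n r \<beta> 0 a"
  unfolding Tf_def dl_def by simp

lemma sigma_FF:
  assumes "r \<le> n" "0 < r"
  shows "Vtil n r \<beta> $$ (0,0) = FF n (vv \<beta>) (\<lambda>k. if k < r then 1 else 0)"
proof -
  have "Vtil n r \<beta> $$ (0,0) = EE n \<beta> (\<lambda>a. Tf n r \<beta> (dl 0) a * Tf n r \<beta> (dl 0) a)"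
    using assms by (simp add: Vt_entry Tf_dl0)
  thus ?thesis using ET_FF[OF assms] up_dl0 by simp
qed



lemma mat_inv_props:
  fixes A :: "real mat"
  assumes A: "A \<in> carrier_mat k k"
    and inj: "\<And>u. (\<And>i. i < k \<Longrightarrow> (\<Sum>j<k. A $$ (i,j) * u j) = 0) \<Longrightarrow> (\<And>i. i < k \<Longrightarrow> u i = 0)"
  shows "\<And>i j. i < k \<Longrightarrow> j < k \<Longrightarrow> (\<Sum>l<k. A $$ (i,l) * mat_inv A $$ (l,j)) = (if i = j then 1 else 0)"
    and "\<And>i j. i < k \<Longrightarrow> j < k \<Longrightarrow> (\<Sum>l<k. mat_inv A $$ (i,l) * A $$ (l,j)) = (if i = j then 1 else 0)"
proof -
  have "det A \<noteq> 0"
  proof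
    assume "det A = 0"
    then obtain v where v: "v \<in> carrier_vec k" "v \<noteq> 0\<^sub>v k" "A *\<^sub>v v = 0\<^sub>v k"
      using det_0_iff_vec_prod_zero_field[OF A] by blast
    have "(\<Sum>j<k. A $$ (i,j) * v $ j) = 0" if "i < k" for i
    proof -
      have "(A *\<^sub>v v) $ i = 0" using v(3) that by simp
      thus ?thesis using that A v(1) by (simp add: scalar_prod_def atLeast0LessThan)
    qed
    hence "v $ i = 0" if "i < k" for i using inj[of "\<lambda>j. v $ j"] that by blast
    hence "v = 0\<^sub>v k" using v(1) by (intro eq_vecI) auto
    with v(2) show False by simp
  qed
  from det_non_zero_imp_unit[OF A this, of "()"]
  obtain B where B: "B \<in> carrier_mat k k" "A * B = 1\<^sub>m k" "B * A = 1\<^sub>m k"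
    unfolding Units_def ring_mat_def by auto
  hence "\<exists>B. inverts_mat A B \<and> inverts_mat B A"
    using A by (auto simp: inverts_mat_def)
  hence inv: "inverts_mat A (mat_inv A) \<and> inverts_mat (mat_inv A) A"
    unfolding mat_inv_def by (rule someI_ex)
  define M where "M = mat_inv A"
  have AM: "A * M = 1\<^sub>m k" using inv A by (simp add: inverts_mat_def M_def)
  have MA: "M * A = 1\<^sub>m (dim_row M)" using inv by (simp add: inverts_mat_def M_def)
  have dc: "dim_col M = k" using arg_cong[OF AM, of dim_col] by simp
  have dr: "dim_row M = k" using arg_cong[OF MA, of dim_col] A by simp
  show "(\<Sum>l<k. A $$ (i,l) * mat_inv A $$ (l,j)) = (if i = j then 1 else 0)" if "i < k" "j < k" for i j
  proof -
    have "(A * M) $$ (i,j) = (if i = j then 1 else 0)" using AM that by simp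
    thus ?thesis using that A dc dr by (simp add: scalar_prod_def atLeast0LessThan M_def)
  qed
  show "(\<Sum>l<k. mat_inv A $$ (i,l) * A $$ (l,j)) = (if i = j then 1 else 0)" if "i < k" "j < k" for i j
  proof -
    have "(M * A) $$ (i,j) = (if i = j then 1 else 0)" using MA that dr by simp
    thus ?thesis using that A dc dr by (simp add: scalar_prod_def atLeast0LessThan M_def)
  qed
qed

lemma inv_anti: "0 < (x::real) \<Longrightarrow> x \<le> y \<Longrightarrow> 1 / y \<le> 1 / x"
  by (simp add: frac_le)

definition Qs :: "nat \<Rightarrow> (nat \<Rightarrow> real) \<Rightarrow> real set" where
  "Qs n \<beta> = {(1 + exp (\<beta> i + \<beta> j))^2 / exp (\<beta> i + \<beta> j) | i j. i < n \<and> j < n \<and> i \<noteq> j}"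

lemma Qs_finite: "finite (Qs n \<beta>)"
proof -
  have "Qs n \<beta> \<subseteq> (\<lambda>(i,j). (1 + exp (\<beta> i + \<beta> j))^2 / exp (\<beta> i + \<beta> j)) ` ({..<n} \<times> {..<n})"
    unfolding Qs_def by auto
  thus ?thesis by (rule finite_subset) auto
qed

lemma vv_inv: "vv \<beta> i j = 1 / ((1 + exp (\<beta> i + \<beta> j))^2 / exp (\<beta> i + \<beta> j))"
  unfolding vv_def by simp

lemma q_ge4: "(1 + exp x)^2 / exp x \<ge> (4::real)"
proof -
  have "(1 + exp x)^2 - 4 * exp x = (1 - exp x)^2" by (simp add: power2_eq_square algebra_simps)
  hence "(1 + exp x)^2 \<ge> 4 * exp x" by (smt (verit) zero_le_power2)
  thus ?thesis by (simp add: le_divide_eq)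
qed

lemma bn_cn:
  assumes "2 \<le> n"
  shows "cn n \<beta> \<ge> 4" "bn n \<beta> \<ge> cn n \<beta>"
    and "\<And>i j. i < n \<Longrightarrow> j < n \<Longrightarrow> i \<noteq> j \<Longrightarrow> 1 / bn n \<beta> \<le> vv \<beta> i j \<and> vv \<beta> i j \<le> 1 / cn n \<beta>"
proof -
  have bn: "bn n \<beta> = Max (Qs n \<beta>)" and cn: "cn n \<beta> = Min (Qs n \<beta>)" by (simp_all add: bn_def cn_def Qs_def)
  have mem: "(1 + exp (\<beta> i + \<beta> j))^2 / exp (\<beta> i + \<beta> j) \<in> Qs n \<beta>" if "i < n" "j < n" "i \<noteq> j" for i j
    unfolding Qs_def using that by blast
  have ne: "Qs n \<beta> \<noteq> {}" using mem[of 0 1] assms by auto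
  have all4: "\<forall>q\<in>Qs n \<beta>. q \<ge> 4" unfolding Qs_def using q_ge4 by auto
  show c4: "cn n \<beta> \<ge> 4" unfolding cn using Qs_finite ne all4 by simp
  have m01: "(1 + exp (\<beta> 0 + \<beta> 1))^2 / exp (\<beta> 0 + \<beta> 1) \<in> Qs n \<beta>" using mem[of 0 1] assms by auto
  show "bn n \<beta> \<ge> cn n \<beta>" unfolding bn cn
    using Min_le[OF Qs_finite m01] Max_ge[OF Qs_finite m01] by linarith
  fix i j assume ij: "i < n" "j < n" "i \<noteq> j"
  let ?q = "(1 + exp (\<beta> i + \<beta> j))^2 / exp (\<beta> i + \<beta> j)"
  have q4: "?q \<ge> 4" by (rule q_ge4)
  have "?q \<le> bn n \<beta>" unfolding bn using Qs_finite mem[OF ij] by simp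
  hence "1 / bn n \<beta> \<le> 1 / ?q" using q4 by (intro inv_anti) auto
  moreover have "cn n \<beta> \<le> ?q" unfolding cn using Qs_finite mem[OF ij] by simp
  hence "1 / ?q \<le> 1 / cn n \<beta>" using c4 by (intro inv_anti) auto
  ultimately show "1 / bn n \<beta> \<le> vv \<beta> i j \<and> vv \<beta> i j \<le> 1 / cn n \<beta>" by (simp add: vv_inv)
qed



definition epsn :: "nat \<Rightarrow> nat \<Rightarrow> (nat \<Rightarrow> real) \<Rightarrow> real" where
  "epsn n r \<beta> = r * bn n \<beta> / (cn n \<beta> * (real n - real r - 2))"

lemma vv_pos: "vv \<beta> i j > 0"
proof -
  have "0 < 1 + exp (\<beta> i + \<beta> j)" using exp_gt_zero[of "\<beta> i + \<beta> j"] by linarith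
  thus ?thesis unfolding vv_def by (intro divide_pos_pos zero_less_power) auto
qed

lemma FF_term:
  assumes "k < l" "l < n" "\<And>k l. k < l \<Longrightarrow> l < n \<Longrightarrow> v k l \<ge> 0"
  shows "(y k + y l)^2 * v k l \<le> FF n v y"
proof -
  have nn: "\<And>l k. l < n \<Longrightarrow> k < l \<Longrightarrow> 0 \<le> (y k + y l)^2 * v k l" using assms(3) by simp
  have "(y k + y l)^2 * v k l \<le> (\<Sum>k'<l. (y k' + y l)^2 * v k' l)"
    by (rule member_le_sum) (use assms nn in auto)
  also have "\<dots> \<le> FF n v y" unfolding FF_def
    by (rule member_le_sum[of l _ "\<lambda>l. \<Sum>k<l. (y k + y l)^2 * v k l"]) (use assms nn in \<open>auto intro!: sum_nonneg\<close>)
  finally show ?thesis .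
qed

lemma FF_nonneg: "FF n (vv \<beta>) y \<ge> 0"
  unfolding FF_def by (intro sum_nonneg mult_nonneg_nonneg zero_le_power2 less_imp_le[OF vv_pos])

lemma amgm_abs:
  fixes x y t :: real assumes "t > 0"
  shows "\<bar>x * y\<bar> \<le> (t * x^2 + y^2 / t) / 2"
proof -
  have "0 \<le> (t * \<bar>x\<bar> - \<bar>y\<bar>)^2" by simp
  hence "2 * t * \<bar>x\<bar> * \<bar>y\<bar> \<le> t^2 * x^2 + y^2" by (simp add: power2_eq_square algebra_simps)
  hence "(2 * t * \<bar>x\<bar> * \<bar>y\<bar>) / t \<le> (t^2 * x^2 + y^2) / t" using assms by (intro divide_right_mono) auto
  moreover have "(2 * t * \<bar>x\<bar> * \<bar>y\<bar>) / t = 2 * \<bar>x * y\<bar>" using assms by (simp add: abs_mult)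
  moreover have "(t^2 * x^2 + y^2) / t = t * x^2 + y^2 / t" using assms by (simp add: field_simps power2_eq_square)
  ultimately show ?thesis by simp
qed

lemma quad_V:
  "(\<Sum>i<n. x i * (\<Sum>j<n. Vmat n \<beta> $$ (i,j) * y j)) = (\<Sum>e\<in>pairs n. ew x e * ew y e * ve \<beta> e)"
proof -
  have "(\<Sum>i<n. x i * (\<Sum>j<n. Vmat n \<beta> $$ (i,j) * y j)) = (\<Sum>i<n. \<Sum>e\<in>pairs n. x i * mem i e * (ew y e * ve \<beta> e))"
    by (intro sum.cong refl) (simp add: Vrow sum_distrib_left mult.assoc)
  also have "\<dots> = (\<Sum>e\<in>pairs n. (\<Sum>i<n. x i * mem i e) * (ew y e * ve \<beta> e))"
    by (subst sum.swap) (simp add: sum_distrib_right)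
  also have "\<dots> = (\<Sum>e\<in>pairs n. ew x e * ew y e * ve \<beta> e)"
    by (intro sum.cong refl) (simp add: sum_mem mult.assoc)
  finally show ?thesis .
qed

lemma V_inj:
  assumes n3: "3 \<le> n" and h: "\<And>i. i < n \<Longrightarrow> (\<Sum>j<n. Vmat n \<beta> $$ (i,j) * u j) = 0" and i: "i < n"
  shows "u i = 0"
proof -
  have "FF n (vv \<beta>) u = 0"
    using quad_V[where x=u and y=u and n=n and \<beta>=\<beta>] edge_FF[where n=n and y=u and \<beta>=\<beta>] h by simp
  hence s0: "u k + u l = 0" if "k < l" "l < n" for k l
  proof -
    have "(u k + u l)^2 * vv \<beta> k l \<le> 0"
      using FF_term[OF that, of "vv \<beta>" u] vv_pos[of \<beta>] \<open>FF n (vv \<beta>) u = 0\<close> by (auto intro: less_imp_le)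
    hence "(u k + u l)^2 \<le> 0" using vv_pos[of \<beta> k l] by (simp add: mult_le_0_iff)
    thus ?thesis by simp
  qed
  have "u 0 + u 1 = 0" "u 0 + u 2 = 0" "u 1 + u 2 = 0" using s0 n3 by auto
  hence u0: "u 0 = 0" by linarith
  show ?thesis
  proof (cases "i = 0")
    case True thus ?thesis using u0 by simp
  next
    case False thus ?thesis using s0[of 0 i] i u0 by simp
  qed
qed

lemma V_inv:
  assumes "3 \<le> n" "i < n" "j < n"
  shows "(\<Sum>l<n. mat_inv (Vmat n \<beta>) $$ (i,l) * Vmat n \<beta> $$ (l,j)) = (if i = j then 1 else 0)"
  apply (rule mat_inv_props(2))
  using V_inj[OF assms(1)] assms by (auto simp: Vmat_def)

context
  fixes n r :: nat and \<beta> :: "nat \<Rightarrow> real"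
  assumes r0: "0 < r" and rn: "r + 3 \<le> n" and eps_half: "epsn n r \<beta> \<le> 1/2"
begin

abbreviation "m \<equiv> n - r"
abbreviation "\<sigma> \<equiv> Vtil n r \<beta> $$ (0,0)"
abbreviation "\<epsilon> \<equiv> epsn n r \<beta>"

lemma rle: "r \<le> n" using rn by simp

lemma vbounds: "\<And>k l. k < l \<Longrightarrow> l < n \<Longrightarrow> 1 / bn n \<beta> \<le> vv \<beta> k l \<and> vv \<beta> k l \<le> 1 / cn n \<beta>"
  using bn_cn(3)[of n] rn by auto

lemma c_pos: "cn n \<beta> > 0" using bn_cn(1)[of n \<beta>] rn by simp
lemma b_pos: "bn n \<beta> > 0" using bn_cn(1,2)[of n \<beta>] rn by simp

lemma eps_pos: "\<epsilon> > 0"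
  unfolding epsn_def using r0 b_pos c_pos rn by (intro divide_pos_pos mult_pos_pos) auto

lemma lowerT: "EE n \<beta> (\<lambda>a. Tf n r \<beta> u a * Tf n r \<beta> u a) \<ge> (1 - \<epsilon>) * \<sigma> * (u 0)^2"
proof -
  have "FF n (vv \<beta>) (up r u) \<ge> (1 - \<epsilon>) * FF n (vv \<beta>) (\<lambda>k. if k < r then 1 else 0) * (up r u 0)^2"
    unfolding epsn_def
    by (rule FF_lower[OF rn r0 vbounds b_pos c_pos]) (auto simp: up_def)
  thus ?thesis using ET_FF[OF rle r0] sigma_FF[OF rle r0] r0 by (simp add: up_def)
qed

lemma sigma_pos: "\<sigma> > 0"
proof -
  have "(1 + 0)^2 * vv \<beta> 0 r \<le> FF n (vv \<beta>) (\<lambda>k. if k < r then 1 else (0::real))"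
    using FF_term[of 0 r n "vv \<beta>" "\<lambda>k. if k < r then 1 else (0::real)"] r0 rn vv_pos[of \<beta>]
    by (auto intro: less_imp_le)
  thus ?thesis using sigma_FF[OF rle r0] vv_pos[of \<beta> 0 r] by simp
qed

lemma Vt_carrier: "Vtil n r \<beta> \<in> carrier_mat (m+1) (m+1)"
  by (simp add: Vtil_def)

lemma lessThan_m: "{..<m+1} = {..m}" by auto

lemma Vt_inj:
  assumes "\<And>i. i < m+1 \<Longrightarrow> (\<Sum>j<m+1. Vtil n r \<beta> $$ (i,j) * u j) = 0" "i < m+1"
  shows "u i = 0"
proof -
  have h: "(\<Sum>l\<le>m. Vtil n r \<beta> $$ (k,l) * u l) = 0" if "k \<le> m" for k
  proof -
    have "k < m + 1" using that by simp
    from assms(1)[OF this] show ?thesis by (simp only: lessThan_m)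
  qed
  have z: "EE n \<beta> (\<lambda>a. Tf n r \<beta> u a * Tf n r \<beta> u a) = 0"
    unfolding ET by (simp add: h)
  have "(1 - \<epsilon>) * \<sigma> * (u 0)^2 \<le> 0" using lowerT[of u] z by simp
  moreover have "(1 - \<epsilon>) * \<sigma> > 0" using eps_half sigma_pos by simp
  ultimately have u0: "u 0 = 0"
    by (metis mult_pos_pos not_less power2_eq_square zero_less_power2 mult_le_0_iff mult_eq_0_iff)
  have FF0: "FF n (vv \<beta>) (up r u) = 0" using z ET_FF[OF rle r0] by simp
  show ?thesis
  proof (cases "i = 0")
    case True thus ?thesis using u0 by simp
  next
    case False
    define l where "l = r + i - 1"
    have l: "0 < l" "l < n" "r \<le> l" using False assms(2) r0 rn by (auto simp: l_def)
    have "(up r u 0 + up r u l)^2 * vv \<beta> 0 l \<le> 0"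
      using FF_term[of 0 l n "vv \<beta>" "up r u"] l FF0 vv_pos[of \<beta>] by (auto intro: less_imp_le)
    moreover have "up r u 0 + up r u l = u i" using r0 l False u0 by (simp add: up_def l_def)
    ultimately have "(u i)^2 * vv \<beta> 0 l \<le> 0" by simp
    hence "(u i)^2 \<le> 0" using vv_pos[of \<beta> 0 l] by (simp add: mult_le_0_iff)
    thus ?thesis by simp
  qed
qed

abbreviation "MM \<equiv> mat_inv (Vtil n r \<beta>)"

lemma Vt_inv:
  "\<And>i j. i \<le> m \<Longrightarrow> j \<le> m \<Longrightarrow> (\<Sum>l\<le>m. Vtil n r \<beta> $$ (i,l) * MM $$ (l,j)) = (if i = j then 1 else 0)"
proof -
  fix i j assume ij: "i \<le> m" "j \<le> m"
  have "(\<Sum>l<m+1. Vtil n r \<beta> $$ (i,l) * MM $$ (l,j)) = (if i = j then 1 else 0)"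
    apply (rule mat_inv_props(1)[OF Vt_carrier])
    using Vt_inj ij by auto
  thus "(\<Sum>l\<le>m. Vtil n r \<beta> $$ (i,l) * MM $$ (l,j)) = (if i = j then 1 else 0)" by (simp only: lessThan_m)
qed

definition "gg = (\<lambda>l. MM $$ (l,0))"

lemma Vg: "i \<le> m \<Longrightarrow> (\<Sum>l\<le>m. Vtil n r \<beta> $$ (i,l) * gg l) = (if i = 0 then 1 else 0)"
  unfolding gg_def using Vt_inv[of i 0] by simp

lemma Vg_sum: "(\<Sum>k\<le>m. u k * (\<Sum>l\<le>m. Vtil n r \<beta> $$ (k,l) * gg l)) = u 0"
proof -
  have "(\<Sum>k\<le>m. u k * (\<Sum>l\<le>m. Vtil n r \<beta> $$ (k,l) * gg l)) = (\<Sum>k\<le>m. u k * (if k = 0 then 1 else 0))"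
    by (intro sum.cong refl) (simp add: Vg)
  thus ?thesis by simp
qed

lemma E_gg: "EE n \<beta> (\<lambda>a. Tf n r \<beta> gg a * Tf n r \<beta> gg a) = gg 0"
  unfolding ET by (rule Vg_sum)

lemma E_dg: "EE n \<beta> (\<lambda>a. Tf n r \<beta> (dl 0) a * Tf n r \<beta> gg a) = 1"
  unfolding ET Vg_sum by (simp add: dl_def)

lemma E_dd: "EE n \<beta> (\<lambda>a. Tf n r \<beta> (dl 0) a * Tf n r \<beta> (dl 0) a) = \<sigma>"
  unfolding ET by (simp add: dl_def)

lemma Tf0: "Tf n r \<beta> (dl 0) a = Yt n r \<beta> 0 a" using Tf_dl0 rle by simp

lemma g0_bounds: "1 \<le> gg 0 * \<sigma>" "gg 0 * \<sigma> \<le> 1 / (1 - \<epsilon>)"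
proof -
  define t where "t = 1 / \<sigma>"
  have "0 \<le> EE n \<beta> (\<lambda>a. (Tf n r \<beta> gg a - t * Tf n r \<beta> (dl 0) a)^2)"
    by (rule integral_nonneg_AE) auto
  also have "\<dots> = EE n \<beta> (\<lambda>a. Tf n r \<beta> gg a * Tf n r \<beta> gg a)
      - 2 * t * EE n \<beta> (\<lambda>a. Tf n r \<beta> (dl 0) a * Tf n r \<beta> gg a)
      + t^2 * EE n \<beta> (\<lambda>a. Tf n r \<beta> (dl 0) a * Tf n r \<beta> (dl 0) a)"
    by (simp add: power2_eq_square algebra_simps)
  also have "\<dots> = gg 0 - 1 / \<sigma>"
    unfolding E_gg E_dg E_dd t_def using sigma_pos by (simp add: power2_eq_square field_simps)
  finally show g1: "1 \<le> gg 0 * \<sigma>" using sigma_pos by (simp add: field_simps)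
  have gpos: "gg 0 > 0" using g1 sigma_pos by (smt (verit) mult_nonpos_nonneg)
  have "(1 - \<epsilon>) * \<sigma> * (gg 0)^2 \<le> gg 0" using lowerT[of gg] E_gg by simp
  hence "(1 - \<epsilon>) * \<sigma> * gg 0 \<le> 1" using gpos by (simp add: power2_eq_square)
  thus "gg 0 * \<sigma> \<le> 1 / (1 - \<epsilon>)" using eps_half by (simp add: field_simps)
qed

lemma eps_frac: "1 / (1 - \<epsilon>) - 1 \<le> 2 * \<epsilon>"
proof -
  have "1 / (1 - \<epsilon>) - 1 = \<epsilon> / (1 - \<epsilon>)" using eps_half by (simp add: field_simps)
  also have "\<dots> \<le> \<epsilon> / (1/2)" using eps_half eps_pos by (intro divide_left_mono) auto
  finally show ?thesis by simp
qed

lemma Yt0_sum: "(\<Sum>i<r. dbar n \<beta> i a) = Yt n r \<beta> 0 a" using Yt0[OF rle] by simp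

lemma E_YY: "EE n \<beta> (\<lambda>a. Yt n r \<beta> 0 a * Yt n r \<beta> 0 a) = \<sigma>"
  using Vt_entry[of 0 n r 0 \<beta>] by simp

lemma wtil11_eq: "wtil11 n r \<beta> = gg 0 - 1 / \<sigma>"
  unfolding wtil11_def Wtil_def gg_def by (simp add: Stil_def)

lemma wtil12_eq: "j < m \<Longrightarrow> wtil12 n r \<beta> j = gg (j + 1)"
  unfolding wtil12_def Wtil_def gg_def by (simp add: Stil_def)

lemma part_a_bound:
  "EE n \<beta> (\<lambda>a. \<bar>(\<Sum>i<r. dbar n \<beta> i a) * wtil11 n r \<beta> * (\<Sum>i<r. dbar n \<beta> i a)\<bar>) \<le> 2 * \<epsilon>"
proof -
  have "EE n \<beta> (\<lambda>a. \<bar>(\<Sum>i<r. dbar n \<beta> i a) * wtil11 n r \<beta> * (\<Sum>i<r. dbar n \<beta> i a)\<bar>)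
      = EE n \<beta> (\<lambda>a. \<bar>gg 0 - 1 / \<sigma>\<bar> * (Yt n r \<beta> 0 a * Yt n r \<beta> 0 a))"
  proof -
    have "\<bar>Yt n r \<beta> 0 a * (gg 0 - 1 / \<sigma>) * Yt n r \<beta> 0 a\<bar> = \<bar>gg 0 - 1 / \<sigma>\<bar> * (Yt n r \<beta> 0 a * Yt n r \<beta> 0 a)" for a
      by (simp add: abs_mult)
    thus ?thesis unfolding Yt0_sum wtil11_eq by simp
  qed
  also have "\<dots> = \<bar>gg 0 - 1 / \<sigma>\<bar> * \<sigma>" using E_YY by simp
  also have "\<dots> = gg 0 * \<sigma> - 1" using g0_bounds(1) sigma_pos
    by (simp add: abs_if field_simps split: if_splits)
  also have "\<dots> \<le> 2 * \<epsilon>" using g0_bounds(2) eps_frac by simp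
  finally show ?thesis .
qed

lemma Tf_split: "Tf n r \<beta> gg a = gg 0 * Yt n r \<beta> 0 a + (\<Sum>j<m. wtil12 n r \<beta> j * dbar n \<beta> (r + j) a)"
proof -
  have m: "m = Suc (m - 1)" using rn by simp
  have "Tf n r \<beta> gg a = (\<Sum>k<Suc m. gg k * Yt n r \<beta> k a)" unfolding Tf_def by (simp add: lessThan_Suc_atMost)
  also have "\<dots> = gg 0 * Yt n r \<beta> 0 a + (\<Sum>j<m. gg (Suc j) * Yt n r \<beta> (Suc j) a)"
    by (subst sum.lessThan_Suc_shift) simp
  also have "(\<Sum>j<m. gg (Suc j) * Yt n r \<beta> (Suc j) a) = (\<Sum>j<m. wtil12 n r \<beta> j * dbar n \<beta> (r + j) a)"
    by (intro sum.cong refl) (simp add: wtil12_eq Ytk)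
  finally show ?thesis .
qed

lemma part_b_bound:
  "EE n \<beta> (\<lambda>a. \<bar>(\<Sum>i<r. dbar n \<beta> i a) * (\<Sum>j<m. wtil12 n r \<beta> j * dbar n \<beta> (r + j) a)\<bar>) \<le> 3 * sqrt \<epsilon>"
proof -
  define Y where "Y a = Tf n r \<beta> gg a - gg 0 * Yt n r \<beta> 0 a" for a
  have XY: "(\<Sum>i<r. dbar n \<beta> i a) * (\<Sum>j<m. wtil12 n r \<beta> j * dbar n \<beta> (r + j) a) = Yt n r \<beta> 0 a * Y a" for a
    unfolding Yt0_sum Y_def Tf_split by simp
  define \<delta> where "\<delta> = gg 0 * \<sigma> - 1"
  have d0: "0 \<le> \<delta>" "\<delta> \<le> 2 * \<epsilon>" using g0_bounds eps_frac by (auto simp: \<delta>_def)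
  have EY: "EE n \<beta> (\<lambda>a. (Y a)^2) = (1 + \<delta>) * \<delta> / \<sigma>"
  proof -
    have "EE n \<beta> (\<lambda>a. (Y a)^2) = EE n \<beta> (\<lambda>a. Tf n r \<beta> gg a * Tf n r \<beta> gg a)
       - 2 * gg 0 * EE n \<beta> (\<lambda>a. Tf n r \<beta> (dl 0) a * Tf n r \<beta> gg a)
       + (gg 0)^2 * EE n \<beta> (\<lambda>a. Tf n r \<beta> (dl 0) a * Tf n r \<beta> (dl 0) a)"
      unfolding Y_def Tf0 by (simp add: power2_eq_square algebra_simps)
    also have "\<dots> = gg 0 * (gg 0 * \<sigma> - 1)" unfolding E_gg E_dg E_dd by (simp add: power2_eq_square algebra_simps)
    also have "\<dots> = (1 + \<delta>) * \<delta> / \<sigma>" using sigma_pos by (simp add: \<delta>_def field_simps)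
    finally show ?thesis .
  qed
  define t where "t = sqrt \<epsilon> / \<sigma>"
  have se: "sqrt \<epsilon> > 0" using eps_pos by simp
  have t0: "t > 0" unfolding t_def using se sigma_pos by simp
  have "EE n \<beta> (\<lambda>a. \<bar>Yt n r \<beta> 0 a * Y a\<bar>) \<le> EE n \<beta> (\<lambda>a. (t * (Yt n r \<beta> 0 a)^2 + (Y a)^2 / t) / 2)"
    by (rule integral_mono) (simp, simp, rule amgm_abs[OF t0])
  also have "\<dots> = (t * \<sigma> + EE n \<beta> (\<lambda>a. (Y a)^2) / t) / 2"
    using E_YY by (simp add: power2_eq_square)
  also have "\<dots> = (sqrt \<epsilon> + (1 + \<delta>) * \<delta> / sqrt \<epsilon>) / 2"
    unfolding EY t_def using sigma_pos se by (simp add: field_simps)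
  also have "(1 + \<delta>) * \<delta> / sqrt \<epsilon> \<le> 2 * (2 * \<epsilon>) / sqrt \<epsilon>"
    using d0 eps_half se by (intro divide_right_mono mult_mono) auto
  also have "2 * (2 * \<epsilon>) / sqrt \<epsilon> = 4 * sqrt \<epsilon>"
    using se eps_pos by (simp add: field_simps real_sqrt_mult[symmetric] flip: power2_eq_square)
  finally have "EE n \<beta> (\<lambda>a. \<bar>Yt n r \<beta> 0 a * Y a\<bar>) \<le> (sqrt \<epsilon> + 4 * sqrt \<epsilon>) / 2" by simp
  moreover have "(sqrt \<epsilon> + 4 * sqrt \<epsilon>) / 2 \<le> 3 * sqrt \<epsilon>" using se by simp
  ultimately show ?thesis unfolding XY by (rule order_trans)
qed

lemma Tf_dlk: "k \<le> m \<Longrightarrow> Tf n r \<beta> (dl k) a = Yt n r \<beta> k a"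
  unfolding Tf_def dl_def by simp

lemma up_dl_suc: "up r (dl (Suc l)) i = (if i = r + l then 1 else 0)"
  by (auto simp: up_def dl_def)

context
  assumes eq: "\<And>i. i < r \<Longrightarrow> \<beta> i = \<beta> 0"
begin

lemma vv_eq: assumes "i < r" shows "vv \<beta> i k = vv \<beta> 0 k"
  unfolding vv_def using eq[OF assms] by simp

lemma block_eq:
  assumes i0: "i0 < m" and j0: "j0 < m"
  shows "mat_inv (Vmat n \<beta>) $$ (r + i0, r + j0) = MM $$ (i0 + 1, j0 + 1)"
proof -
  define w where "w l = MM $$ (l, j0 + 1)" for l
  define z where "z = up r w"
  define R where "R i = (\<Sum>j<n. Vmat n \<beta> $$ (i,j) * z j)" for i
  have Vw: "(\<Sum>l\<le>m. Vtil n r \<beta> $$ (k,l) * w l) = (if k = j0 + 1 then 1 else 0)" if "k \<le> m" for k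
    unfolding w_def using Vt_inv[of k "j0+1"] that j0 by simp
  have VR: "(\<Sum>l\<le>m. Vtil n r \<beta> $$ (k,l) * w l) = (\<Sum>i<n. up r (dl k) i * R i)" if "k \<le> m" for k
  proof -
    have "(\<Sum>l\<le>m. Vtil n r \<beta> $$ (k,l) * w l) = EE n \<beta> (\<lambda>a. Tf n r \<beta> (dl k) a * Tf n r \<beta> w a)"
      using Vt_row[OF that] Tf_dlk[OF that] by simp
    also have "\<dots> = (\<Sum>e\<in>pairs n. ew (up r (dl k)) e * ew (up r w) e * ve \<beta> e)"
      by (rule ET_edge[OF rle r0])
    also have "\<dots> = (\<Sum>i<n. up r (dl k) i * R i)"
      unfolding R_def z_def by (rule quad_V[symmetric])
    finally show ?thesis .
  qed
  have Rsym: "R i = R 0" if "i < r" for i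
  proof -
    define h where "h k = (w 0 + z k) * vv \<beta> 0 k" for k
    have Ri: "R i = (\<Sum>k<n. h k) - 2 * w 0 * vv \<beta> 0 0" if "i < r" for i
    proof -
      have inn: "i < n" using that rn by simp
      have "R i = (\<Sum>e\<in>pairs n. mem i e * (ew z e * ve \<beta> e))" unfolding R_def by (rule Vrow[OF inn])
      also have "\<dots> = (\<Sum>k\<in>{..<n}-{i}. ew z (srt i k) * ve \<beta> (srt i k))" by (rule star[OF inn])
      also have "\<dots> = (\<Sum>k\<in>{..<n}-{i}. h k)"
        by (intro sum.cong refl) (auto simp: ew_srt ve_srt h_def z_def up_def that vv_eq[OF that])
      also have "\<dots> = (\<Sum>k<n. h k) - h i" using inn by (simp add: sum_diff1)
      also have "h i = 2 * w 0 * vv \<beta> 0 0"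
        using that vv_eq[of i 0] vv_sym[of \<beta> 0 i] by (simp add: h_def z_def up_def)
      finally show ?thesis .
    qed
    show ?thesis using Ri[OF that] Ri[OF r0] by simp
  qed
  have sumR: "(\<Sum>i<r. R i) = 0"
  proof -
    have "(\<Sum>i<n. up r (dl 0) i * R i) = 0" using VR[of 0] Vw[of 0] by simp
    moreover have "(\<Sum>i<n. up r (dl 0) i * R i) = (\<Sum>i<r. R i)"
    proof -
      have "(\<Sum>i<n. up r (dl 0) i * R i) = (\<Sum>i<n. if i < r then R i else 0)"
        by (intro sum.cong refl) (simp add: up_dl0)
      also have "\<dots> = (\<Sum>i\<in>{..<n} \<inter> {i. i < r}. R i)" by (simp add: sum.inter_restrict)
      also have "{..<n} \<inter> {i. i < r} = {..<r}" using rn by auto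
      finally show ?thesis .
    qed
    ultimately show ?thesis by simp
  qed
  have R0: "R 0 = 0"
  proof -
    have "(\<Sum>i<r. R i) = (\<Sum>i<r. R 0)" by (intro sum.cong refl) (rule Rsym, simp)
    hence "(\<Sum>i<r. R i) = r * R 0" by simp
    thus ?thesis using sumR r0 by simp
  qed
  have Rval: "R i = (if i = r + j0 then 1 else 0)" if "i < n" for i
  proof (cases "i < r")
    case True thus ?thesis using Rsym[OF True] R0 by simp
  next
    case False
    define l where "l = i - r"
    have il: "i = r + l" "l < m" using False that by (auto simp: l_def)
    have "(\<Sum>i'<n. up r (dl (Suc l)) i' * R i') = R i"
      using il rn by (simp add: up_dl_suc)
    moreover have "(\<Sum>i'<n. up r (dl (Suc l)) i' * R i') = (if l = j0 then 1 else 0)"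
      using VR[of "Suc l"] Vw[of "Suc l"] il by simp
    ultimately show ?thesis using il by auto
  qed
  have zi: "z i = mat_inv (Vmat n \<beta>) $$ (i, r + j0)" if "i < n" for i
  proof -
    have n3: "3 \<le> n" using rn by simp
    have "z i = (\<Sum>j<n. (if i = j then 1 else 0) * z j)" using that by simp
    also have "\<dots> = (\<Sum>j<n. (\<Sum>l<n. mat_inv (Vmat n \<beta>) $$ (i,l) * Vmat n \<beta> $$ (l,j)) * z j)"
      by (intro sum.cong refl) (simp add: V_inv[OF n3 that])
    also have "\<dots> = (\<Sum>l<n. mat_inv (Vmat n \<beta>) $$ (i,l) * R l)"
    proof -
      have "(\<Sum>j<n. (\<Sum>l<n. mat_inv (Vmat n \<beta>) $$ (i,l) * Vmat n \<beta> $$ (l,j)) * z j)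
          = (\<Sum>j<n. \<Sum>l<n. mat_inv (Vmat n \<beta>) $$ (i,l) * (Vmat n \<beta> $$ (l,j) * z j))"
        by (simp add: sum_distrib_right mult.assoc)
      also have "\<dots> = (\<Sum>l<n. \<Sum>j<n. mat_inv (Vmat n \<beta>) $$ (i,l) * (Vmat n \<beta> $$ (l,j) * z j))"
        by (rule sum.swap)
      also have "\<dots> = (\<Sum>l<n. mat_inv (Vmat n \<beta>) $$ (i,l) * R l)"
        unfolding R_def by (simp add: sum_distrib_left)
      finally show ?thesis .
    qed
    also have "\<dots> = (\<Sum>l<n. mat_inv (Vmat n \<beta>) $$ (i,l) * (if l = r + j0 then 1 else 0))"
      by (intro sum.cong refl) (simp add: Rval)
    also have "\<dots> = mat_inv (Vmat n \<beta>) $$ (i, r + j0)" using j0 rn by simp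
    finally show ?thesis .
  qed
  have "z (r + i0) = MM $$ (i0 + 1, j0 + 1)" by (simp add: z_def up_def w_def)
  thus ?thesis using zi[of "r + i0"] i0 by simp
qed

lemma W22_eq:
  assumes "i < m" "j < m"
  shows "W22 n r \<beta> $$ (i,j) = Wtil22 n r \<beta> $$ (i,j)"
  using assms block_eq[OF assms] unfolding W22_def Wtil22_def Wmat_def Wtil_def
  by (simp add: Smat_def Stil_def)

lemma part_c_zero:
  "(\<Sum>i<m. \<Sum>j<m. dbar n \<beta> (r + i) a *
      (W22 n r \<beta> $$ (i,j) - Wtil22 n r \<beta> $$ (i,j)) * dbar n \<beta> (r + j) a) = 0"
  by (simp add: W22_eq)

end

end


lemma div_le_self2: "0 \<le> (x::real) \<Longrightarrow> 1 \<le> c \<Longrightarrow> x / c \<le> x"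
  using mult_left_mono[of 1 c x] by (simp add: divide_le_eq)

lemma markov:
  assumes "\<eta> > 0"
  shows "measure_pmf.prob (beta_pmf n \<beta>) {a. \<bar>X a\<bar> > \<eta>} \<le> EE n \<beta> (\<lambda>a. \<bar>X a\<bar>) / \<eta>"
proof -
  have "measure_pmf.prob (beta_pmf n \<beta>) {a. \<bar>X a\<bar> > \<eta>}
      \<le> measure_pmf.prob (beta_pmf n \<beta>) {a \<in> space (measure_pmf (beta_pmf n \<beta>)). \<eta> \<le> \<bar>X a\<bar>}"
    by (intro measure_pmf.finite_measure_mono) auto
  also have "\<dots> \<le> EE n \<beta> (\<lambda>a. \<bar>X a\<bar>) / \<eta>"
    by (rule integral_Markov_inequality_measure) (use assms in auto)
  finally show ?thesis .
qed

lemma op1_from_bound: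
  assumes ev: "\<forall>\<^sub>F n in sequentially. \<forall>\<eta>>0. measure_pmf.prob (P n) {a. \<bar>X n a\<bar> > \<eta>} \<le> B n / \<eta>"
    and B: "(B \<longlongrightarrow> 0) sequentially"
  shows "op1 P X"
  unfolding op1_def
proof (intro allI impI)
  fix \<eta> :: real assume e: "\<eta> > 0"
  have "((\<lambda>n. B n / \<eta>) \<longlongrightarrow> 0 / \<eta>) sequentially" using e by (intro tendsto_intros B) auto
  hence up: "((\<lambda>n. B n / \<eta>) \<longlongrightarrow> 0) sequentially" by simp
  show "((\<lambda>n. measure_pmf.prob (P n) {a. \<bar>X n a\<bar> > \<eta>}) \<longlongrightarrow> 0) sequentially"
  proof (rule tendsto_sandwich[OF _ _ tendsto_const up])
    show "\<forall>\<^sub>F n in sequentially. 0 \<le> measure_pmf.prob (P n) {a. \<bar>X n a\<bar> > \<eta>}" by simp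
    show "\<forall>\<^sub>F n in sequentially. measure_pmf.prob (P n) {a. \<bar>X n a\<bar> > \<eta>} \<le> B n / \<eta>"
      using ev by eventually_elim (use e in auto)
  qed
qed

lemma eps_lim:
  fixes \<beta> :: "nat \<Rightarrow> nat \<Rightarrow> real"
  assumes r0: "0 < r" and ev: "\<forall>\<^sub>F n in sequentially. (bn n (\<beta> n) / cn n (\<beta> n))^3 \<le> (sqrt (real n))^3"
  shows "((\<lambda>n. epsn n r (\<beta> n)) \<longlongrightarrow> 0) sequentially"
proof (rule tendsto_sandwich[OF _ _ tendsto_const])
  have ev2: "\<forall>\<^sub>F n in sequentially. 2 * r + 6 \<le> n" by (rule eventually_ge_at_top)
  show "\<forall>\<^sub>F n in sequentially. 0 \<le> epsn n r (\<beta> n)"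
    using ev2
  proof eventually_elim
    case (elim n)
    have "cn n (\<beta> n) > 0" "bn n (\<beta> n) > 0" using bn_cn(1,2)[of n "\<beta> n"] elim by auto
    moreover have "real n - real r - 2 > 0" using elim by linarith
    ultimately show ?case unfolding epsn_def by simp
  qed
  show "\<forall>\<^sub>F n in sequentially. epsn n r (\<beta> n) \<le> 2 * real r * (1 / sqrt (real n))"
    using ev ev2
  proof eventually_elim
    case (elim n)
    let ?b = "bn n (\<beta> n)" and ?c = "cn n (\<beta> n)"
    have c0: "?c > 0" "?b > 0" using bn_cn(1,2)[of n "\<beta> n"] elim by auto
    have bc: "?b / ?c \<le> sqrt (real n)"
      by (rule power_le_imp_le_base[of _ 2]) (use elim in \<open>simp_all add: numeral_3_eq_3\<close>)
    have d: "real n - real r - 2 \<ge> real n / 2" using elim by linarith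
    have np: "real n > 0" using elim by simp
    have "epsn n r (\<beta> n) = real r * (?b / ?c) / (real n - real r - 2)"
      unfolding epsn_def by (simp add: field_simps)
    also have "\<dots> \<le> real r * sqrt (real n) / (real n / 2)"
      using bc d np c0 by (intro frac_le mult_left_mono) (auto intro: divide_nonneg_pos)
    also have "\<dots> = 2 * real r * (1 / sqrt (real n))"
      using np by (simp add: field_simps real_sqrt_mult[symmetric] flip: power2_eq_square)
    finally show ?case .
  qed
  have "((\<lambda>n. 1 / sqrt (real n)) \<longlongrightarrow> 0) sequentially" by real_asymp
  thus "((\<lambda>n. 2 * real r * (1 / sqrt (real n))) \<longlongrightarrow> 0) sequentially"
    by (rule tendsto_mult_right_zero)
qed

theorem lemma14:
  fixes \<beta> :: "nat \<Rightarrow> nat \<Rightarrow> real" and r :: nat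
  assumes r_pos: "r > 0"
    and equal: "\<And>n i. i < r \<Longrightarrow> \<beta> n i = \<beta> n 0"
  shows
   "((\<lambda>n. bn n (\<beta> n) ^ 3 / cn n (\<beta> n) ^ 2) \<in> o(\<lambda>n. real n powr (3/2) / sqrt (ln (real n))) \<longrightarrow>
       op1 (\<lambda>n. beta_pmf n (\<beta> n))
           (\<lambda>n a. (\<Sum>i<r. dbar n (\<beta> n) i a) * wtil11 n r (\<beta> n) * (\<Sum>i<r. dbar n (\<beta> n) i a)))
  \<and> ((\<lambda>n. bn n (\<beta> n) ^ 3 / cn n (\<beta> n) ^ 3) \<in> o(\<lambda>n. sqrt (real n)) \<longrightarrow>
       op1 (\<lambda>n. beta_pmf n (\<beta> n))
           (\<lambda>n a. (\<Sum>i<r. dbar n (\<beta> n) i a) *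
                  (\<Sum>j<n - r. wtil12 n r (\<beta> n) j * dbar n (\<beta> n) (r + j) a)))
  \<and> ((\<lambda>n. bn n (\<beta> n) ^ 3 / cn n (\<beta> n) ^ 3) \<in> o(\<lambda>n. real n powr (3/4)) \<longrightarrow>
       op1 (\<lambda>n. beta_pmf n (\<beta> n))
           (\<lambda>n a. \<Sum>i<n - r. \<Sum>j<n - r. dbar n (\<beta> n) (r + i) a *
                  (W22 n r (\<beta> n) $$ (i,j) - Wtil22 n r (\<beta> n) $$ (i,j)) * dbar n (\<beta> n) (r + j) a))"
proof -
  have zero_less_one_real: "(0::real) < 1" by simp
  let ?b = "\<lambda>n. bn n (\<beta> n)" and ?c = "\<lambda>n. cn n (\<beta> n)"
  have cube_le: "(?b n / ?c n)^3 \<le> ?b n ^ 3 / ?c n ^ 2" if "2 \<le> n" for n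
  proof -
    have c4: "?c n \<ge> 4" "?b n \<ge> ?c n" using bn_cn(1,2)[OF that] by auto
    have "(?b n / ?c n)^3 = (?b n ^ 3 / ?c n ^ 2) / ?c n" using c4 by (simp add: power_divide field_simps power2_eq_square power3_eq_cube)
    also have "\<dots> \<le> ?b n ^ 3 / ?c n ^ 2" using c4 by (intro div_le_self2) auto
    finally show ?thesis .
  qed
  have sq3: "sqrt (real n) ^ 3 = real n powr (3/2)" if "1 \<le> n" for n
  proof -
    have "sqrt (real n) ^ 3 = (real n powr (1/2)) ^ 3" by (simp add: powr_half_sqrt)
    also have "\<dots> = real n powr (3/2)" using that by (subst powr_power) auto
    finally show ?thesis .
  qed
  have main: "op1 (\<lambda>n. beta_pmf n (\<beta> n)) X"
    if ev3: "\<forall>\<^sub>F n in sequentially. (?b n / ?c n)^3 \<le> (sqrt (real n))^3"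
      and bound: "\<And>n a. 0 < r \<Longrightarrow> r + 3 \<le> n \<Longrightarrow> epsn n r (\<beta> n) \<le> 1/2 \<Longrightarrow>
             EE n (\<beta> n) (\<lambda>a. \<bar>X n a\<bar>) \<le> B (epsn n r (\<beta> n))"
      and Bc: "((\<lambda>n. B (epsn n r (\<beta> n))) \<longlongrightarrow> 0) sequentially"
    for X :: "nat \<Rightarrow> (nat \<times> nat \<Rightarrow> bool) \<Rightarrow> real" and B
  proof (rule op1_from_bound[OF _ Bc])
    have el: "((\<lambda>n. epsn n r (\<beta> n)) \<longlongrightarrow> 0) sequentially" by (rule eps_lim[OF r_pos ev3])
    have "\<forall>\<^sub>F n in sequentially. epsn n r (\<beta> n) < 1/2" by (rule order_tendstoD(2)[OF el]) simp
    moreover have "\<forall>\<^sub>F n in sequentially. r + 3 \<le> n" by (rule eventually_ge_at_top)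
    ultimately show "\<forall>\<^sub>F n in sequentially. \<forall>\<eta>>0. measure_pmf.prob (beta_pmf n (\<beta> n)) {a. \<bar>X n a\<bar> > \<eta>} \<le> B (epsn n r (\<beta> n)) / \<eta>"
    proof eventually_elim
      case (elim n)
      show ?case
      proof (intro allI impI)
        fix \<eta> :: real assume e: "\<eta> > 0"
        have "measure_pmf.prob (beta_pmf n (\<beta> n)) {a. \<bar>X n a\<bar> > \<eta>} \<le> EE n (\<beta> n) (\<lambda>a. \<bar>X n a\<bar>) / \<eta>"
          by (rule markov[OF e])
        also have "\<dots> \<le> B (epsn n r (\<beta> n)) / \<eta>"
          using bound[OF r_pos, of n] elim e by (intro divide_right_mono) auto
        finally show "measure_pmf.prob (beta_pmf n (\<beta> n)) {a. \<bar>X n a\<bar> > \<eta>} \<le> B (epsn n r (\<beta> n)) / \<eta>" .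
      qed
    qed
  qed
  have el_of: "((\<lambda>n. epsn n r (\<beta> n)) \<longlongrightarrow> 0) sequentially"
    if "\<forall>\<^sub>F n in sequentially. (?b n / ?c n)^3 \<le> (sqrt (real n))^3"
    using eps_lim[OF r_pos that] .
  show ?thesis
  proof (intro conjI impI)
    assume H: "(\<lambda>n. bn n (\<beta> n) ^ 3 / cn n (\<beta> n) ^ 2) \<in> o(\<lambda>n. real n powr (3/2) / sqrt (ln (real n)))"
    have ev3: "\<forall>\<^sub>F n in sequentially. (?b n / ?c n)^3 \<le> (sqrt (real n))^3"
      using landau_o.smallD[OF H, of 1, OF zero_less_one_real] eventually_ge_at_top[of 3]
    proof eventually_elim
      case (elim n)
      have ln1: "ln (real n) \<ge> 1"
      proof -
        have "exp 1 \<le> (3::real)" using exp_le by simp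
        also have "3 \<le> real n" using elim by simp
        finally show ?thesis using exp_gt_zero[of 1] elim by (subst ln_ge_iff) auto
      qed
      have "(?b n / ?c n)^3 \<le> ?b n ^ 3 / ?c n ^ 2" using cube_le elim by simp
      also have "\<dots> \<le> norm (?b n ^ 3 / ?c n ^ 2)" unfolding real_norm_def by (rule abs_ge_self)
      also have "\<dots> \<le> norm (real n powr (3/2) / sqrt (ln (real n)))" using elim by simp
      also have "\<dots> = real n powr (3/2) / sqrt (ln (real n))" using ln1 by simp
      also have "\<dots> \<le> real n powr (3/2)" using ln1 by (intro div_le_self2) auto
      also have "\<dots> = sqrt (real n) ^ 3" using sq3 elim by simp
      finally show ?case .
    qed
    show "op1 (\<lambda>n. beta_pmf n (\<beta> n))
           (\<lambda>n a. (\<Sum>i<r. dbar n (\<beta> n) i a) * wtil11 n r (\<beta> n) * (\<Sum>i<r. dbar n (\<beta> n) i a))"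
      by (rule main[OF ev3, where B = "\<lambda>e. 2 * e"])
         (auto intro: part_a_bound tendsto_mult_right_zero el_of[OF ev3])
  next
    assume H: "(\<lambda>n. bn n (\<beta> n) ^ 3 / cn n (\<beta> n) ^ 3) \<in> o(\<lambda>n. sqrt (real n))"
    have ev3: "\<forall>\<^sub>F n in sequentially. (?b n / ?c n)^3 \<le> (sqrt (real n))^3"
      using landau_o.smallD[OF H, of 1, OF zero_less_one_real] eventually_ge_at_top[of 1]
    proof eventually_elim
      case (elim n)
      have s1: "sqrt (real n) \<ge> 1" using elim by simp
      have "(?b n / ?c n)^3 \<le> norm (?b n ^ 3 / ?c n ^ 3)" unfolding real_norm_def power_divide by (rule abs_ge_self)
      also have "\<dots> \<le> sqrt (real n)" using elim by simp
      also have "\<dots> \<le> sqrt (real n) ^ 3" using s1 by (simp add: power_increasing[of 1 3, simplified])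
      finally show ?case .
    qed
    have Bc: "((\<lambda>n. 3 * sqrt (epsn n r (\<beta> n))) \<longlongrightarrow> 0) sequentially"
    proof -
      have "((\<lambda>n. sqrt (epsn n r (\<beta> n))) \<longlongrightarrow> 0) sequentially"
        using tendsto_real_sqrt[OF el_of[OF ev3]] unfolding real_sqrt_zero .
      thus ?thesis by (rule tendsto_mult_right_zero)
    qed
    show "op1 (\<lambda>n. beta_pmf n (\<beta> n))
           (\<lambda>n a. (\<Sum>i<r. dbar n (\<beta> n) i a) *
                  (\<Sum>j<n - r. wtil12 n r (\<beta> n) j * dbar n (\<beta> n) (r + j) a))"
    proof (rule main[OF ev3, where B = "\<lambda>e. 3 * sqrt e"])
      fix n a assume h: "0 < r" "r + 3 \<le> n" "epsn n r (\<beta> n) \<le> 1/2"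
      show "EE n (\<beta> n) (\<lambda>a. \<bar>(\<Sum>i<r. dbar n (\<beta> n) i a) *
                  (\<Sum>j<n - r. wtil12 n r (\<beta> n) j * dbar n (\<beta> n) (r + j) a)\<bar>) \<le> 3 * sqrt (epsn n r (\<beta> n))"
        by (rule part_b_bound[OF h])
    qed (rule Bc)
  next
    assume H: "(\<lambda>n. bn n (\<beta> n) ^ 3 / cn n (\<beta> n) ^ 3) \<in> o(\<lambda>n. real n powr (3/4))"
    have ev3: "\<forall>\<^sub>F n in sequentially. (?b n / ?c n)^3 \<le> (sqrt (real n))^3"
      using landau_o.smallD[OF H, of 1, OF zero_less_one_real] eventually_ge_at_top[of 1]
    proof eventually_elim
      case (elim n)
      have "(?b n / ?c n)^3 \<le> norm (?b n ^ 3 / ?c n ^ 3)" unfolding real_norm_def power_divide by (rule abs_ge_self)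
      also have "\<dots> \<le> real n powr (3/4)" using elim by simp
      also have "\<dots> \<le> real n powr (3/2)" using elim by (intro powr_mono) auto
      also have "\<dots> = sqrt (real n) ^ 3" using sq3 elim by simp
      finally show ?case .
    qed
    have z: "(\<Sum>i<n - r. \<Sum>j<n - r. dbar n (\<beta> n) (r + i) a *
                  (W22 n r (\<beta> n) $$ (i,j) - Wtil22 n r (\<beta> n) $$ (i,j)) * dbar n (\<beta> n) (r + j) a) = 0"
      if "0 < r" "r + 3 \<le> n" "epsn n r (\<beta> n) \<le> 1/2" for n a
      by (rule part_c_zero[OF that]) (rule equal)
    show "op1 (\<lambda>n. beta_pmf n (\<beta> n))
           (\<lambda>n a. \<Sum>i<n - r. \<Sum>j<n - r. dbar n (\<beta> n) (r + i) a *
                  (W22 n r (\<beta> n) $$ (i,j) - Wtil22 n r (\<beta> n) $$ (i,j)) * dbar n (\<beta> n) (r + j) a)"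
    proof (rule main[OF ev3, where B = "\<lambda>e. 0"])
      fix n a assume h: "0 < r" "r + 3 \<le> n" "epsn n r (\<beta> n) \<le> 1/2"
      show "EE n (\<beta> n) (\<lambda>a. \<bar>\<Sum>i<n - r. \<Sum>j<n - r. dbar n (\<beta> n) (r + i) a *
                  (W22 n r (\<beta> n) $$ (i,j) - Wtil22 n r (\<beta> n) $$ (i,j)) * dbar n (\<beta> n) (r + j) a\<bar>) \<le> 0"
        by (simp only: z[OF h]) simp
    qed simp
  qed
qed


end
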